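(* Let $\mathcal C$ be a quantum channel on a finite-dimensional system $A$, let $v\ge1$, and let $\widetilde{\mathcal C}$ be a vacuum extension of $\mathcal C$ with a $v$-dimensional vacuum sector. Let $\{\widetilde C_i=C_i\oplus C_{\mathrm{Vac},i}\}_{i=1}^r$ be a Kraus representation of $\widetilde{\mathcal C}$ consisting of linearly independent operators, and let $z$ be the number of indices $i$ with $C_i=0$. If $\widetilde{\mathcal C}$ is an extreme point of the convex set of vacuum extensions of $\mathcal C$ with $v$-dimensional vacuum sector, then $z\le\sqrt{v^2+1}-1$. In particular, if $v=1$, none of the operators $C_i$ is zero.
   Context: $\mathrm{Vac}$ is a $v$-dimensional sector orthogonal to $A$. A vacuum extension of $\mathcal C$ is a channel $\widetilde{\mathcal C}$ on $A\oplus\mathrm{Vac}$ such that (i) states supported in $A$ are mapped to states supported in $A$ and states supported in $\mathrm{Vac}$ are mapped to states supported in $\mathrm{Vac}$ (No Leakage Condition), and (ii) its restriction to $A$ (the channel with Kraus operators $P_A\widetilde C_iP_A$) is $\mathcal C$. Such extensions form a convex set; its Kraus operators have block form $C_i\oplus C_{\mathrm{Vac},i}$ with $C_i$ on $\mathcal H_A$ and $C_{\mathrm{Vac},i}$ on $\mathcal H_{\mathrm{Vac}}$. *)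

theory Defs
  imports "Jordan_Normal_Form.Matrix"
begin

text \<open>Finite-dimensional quantum systems are modelled by complex square matrices of a
fixed size; a map on operators is a function on complex matrices, only its values
on matrices of the relevant size matter.\<close>

definition adj :: "complex mat \<Rightarrow> complex mat" where
  "adj K = mat (dim_col K) (dim_row K) (\<lambda>(i,j). cnj (K $$ (j,i)))"

definition tr :: "complex mat \<Rightarrow> complex" where
  "tr M = (\<Sum>i<dim_row M. M $$ (i,i))"

definition psd :: "nat \<Rightarrow> complex mat \<Rightarrow> bool" where
  "psd n M \<longleftrightarrow> M \<in> carrier_mat n n \<and> adj M = M \<and>
     (\<forall>x \<in> carrier_vec n.
        Im (\<Sum>i<n. \<Sum>j<n. cnj (x $ i) * M $$ (i,j) * x $ j) = 0 \<and>
        Re (\<Sum>i<n. \<Sum>j<n. cnj (x $ i) * M $$ (i,j) * x $ j) \<ge> 0)"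

definition density :: "nat \<Rightarrow> complex mat \<Rightarrow> bool" where
  "density n \<rho> \<longleftrightarrow> psd n \<rho> \<and> tr \<rho> = 1"

definition msum :: "nat \<Rightarrow> complex mat list \<Rightarrow> complex mat" where
  "msum n Ms = foldr (+) Ms (0\<^sub>m n n)"

definition kraus_rep :: "nat \<Rightarrow> complex mat list \<Rightarrow> (complex mat \<Rightarrow> complex mat) \<Rightarrow> bool" where
  "kraus_rep n Ks E \<longleftrightarrow>
     (\<forall>K \<in> set Ks. K \<in> carrier_mat n n) \<and>
     msum n (map (\<lambda>K. adj K * K) Ks) = 1\<^sub>m n \<and>
     (\<forall>\<rho> \<in> carrier_mat n n. E \<rho> = msum n (map (\<lambda>K. K * \<rho> * adj K) Ks))"

definition is_channel :: "nat \<Rightarrow> (complex mat \<Rightarrow> complex mat) \<Rightarrow> bool" where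
  "is_channel n E \<longleftrightarrow> (\<exists>Ks. kraus_rep n Ks E)"

text \<open>The total space is A \<oplus> Vac of dimension d + v, where the first d basis vectors
span A and the last v span Vac.\<close>
definition proj_A :: "nat \<Rightarrow> nat \<Rightarrow> complex mat" where
  "proj_A d v = mat (d+v) (d+v) (\<lambda>(i,j). if i = j \<and> i < d then 1 else 0)"

definition proj_Vac :: "nat \<Rightarrow> nat \<Rightarrow> complex mat" where
  "proj_Vac d v = mat (d+v) (d+v) (\<lambda>(i,j). if i = j \<and> d \<le> i then 1 else 0)"

text \<open>The A-block P_A K P_A of an operator on A \<oplus> Vac, viewed as an operator on H_A.\<close>
definition blockA :: "nat \<Rightarrow> complex mat \<Rightarrow> complex mat" where
  "blockA d K = mat d d (\<lambda>(i,j). K $$ (i,j))"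

definition no_leakage :: "nat \<Rightarrow> nat \<Rightarrow> (complex mat \<Rightarrow> complex mat) \<Rightarrow> bool" where
  "no_leakage d v E \<longleftrightarrow>
     (\<forall>\<rho>. density (d+v) \<rho> \<and> proj_A d v * \<rho> * proj_A d v = \<rho> \<longrightarrow>
            proj_A d v * E \<rho> * proj_A d v = E \<rho>) \<and>
     (\<forall>\<rho>. density (d+v) \<rho> \<and> proj_Vac d v * \<rho> * proj_Vac d v = \<rho> \<longrightarrow>
            proj_Vac d v * E \<rho> * proj_Vac d v = E \<rho>)"

definition vacuum_extension ::
  "nat \<Rightarrow> nat \<Rightarrow> (complex mat \<Rightarrow> complex mat) \<Rightarrow> (complex mat \<Rightarrow> complex mat) \<Rightarrow> bool" where
  "vacuum_extension d v C E \<longleftrightarrow>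
     is_channel (d+v) E \<and> no_leakage d v E \<and>
     (\<exists>Ks. kraus_rep (d+v) Ks E \<and>
        (\<forall>\<rho> \<in> carrier_mat d d.
           C \<rho> = msum d (map (\<lambda>K. blockA d K * \<rho> * adj (blockA d K)) Ks)))"

text \<open>Extreme point of a convex set of maps on n x n matrices (maps identified when they
agree on all n x n matrices).\<close>
definition extreme_map :: "nat \<Rightarrow> (complex mat \<Rightarrow> complex mat) set \<Rightarrow> (complex mat \<Rightarrow> complex mat) \<Rightarrow> bool" where
  "extreme_map n S E \<longleftrightarrow> E \<in> S \<and>
     (\<forall>E1 E2 (t::real). E1 \<in> S \<and> E2 \<in> S \<and> 0 < t \<and> t < 1 \<and>
        (\<forall>\<rho> \<in> carrier_mat n n.
           E \<rho> = complex_of_real t \<cdot>\<^sub>m E1 \<rho> + complex_of_real (1 - t) \<cdot>\<^sub>m E2 \<rho>) \<longrightarrow>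
        (\<forall>\<rho> \<in> carrier_mat n n. E1 \<rho> = E \<rho> \<and> E2 \<rho> = E \<rho>))"

definition lin_indep_mats :: "nat \<Rightarrow> complex mat list \<Rightarrow> bool" where
  "lin_indep_mats n Ks \<longleftrightarrow>
     (\<forall>c :: nat \<Rightarrow> complex.
        msum n (map (\<lambda>i. c i \<cdot>\<^sub>m Ks ! i) [0..<length Ks]) = 0\<^sub>m n n \<longrightarrow>
        (\<forall>i < length Ks. c i = 0))"

end

theory Submission
  imports Defs "Jordan_Normal_Form.Determinant"
begin


lemma msum_carrier: "(\<forall>M\<in>set Ms. M \<in> carrier_mat n n) \<Longrightarrow> msum n Ms \<in> carrier_mat n n"
  by (induction Ms) (auto simp: msum_def)

lemma msum_index: "(\<forall>M\<in>set Ms. M \<in> carrier_mat n n) \<Longrightarrow> a < n \<Longrightarrow> b < n \<Longrightarrow>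
   msum n Ms $$ (a,b) = (\<Sum>M\<leftarrow>Ms. M $$ (a,b))"
proof (induction Ms)
  case Nil then show ?case by (simp add: msum_def)
next
  case (Cons M Ms)
  have "msum n (M # Ms) = M + msum n Ms" by (simp add: msum_def)
  moreover have "msum n Ms \<in> carrier_mat n n" using Cons.prems msum_carrier by auto
  ultimately show ?case using Cons by auto
qed

lemma msum_upt: assumes "\<And>k. k < L \<Longrightarrow> f k \<in> carrier_mat n n" "a < n" "b < n"
  shows "msum n (map f [0..<L]) $$ (a,b) = (\<Sum>k<L. f k $$ (a,b))"
proof -
  have "msum n (map f [0..<L]) $$ (a,b) = (\<Sum>M\<leftarrow>map f [0..<L]. M $$ (a,b))"
    using assms by (intro msum_index) auto
  also have "\<dots> = (\<Sum>k\<leftarrow>[0..<L]. f k $$ (a,b))" by (simp add: comp_def)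
  also have "\<dots> = (\<Sum>k<L. f k $$ (a,b))"
    by (simp add: sum_set_upt_conv_sum_list_nat[symmetric] atLeast0LessThan)
  finally show ?thesis .
qed

lemma msum_upt_carrier: assumes "\<And>k. k < L \<Longrightarrow> f k \<in> carrier_mat n n"
  shows "msum n (map f [0..<L]) \<in> carrier_mat n n"
  using assms by (intro msum_carrier) auto

lemma map_via_nth: "map h Ks = map (\<lambda>i. h (Ks ! i)) [0..<length Ks]"
  by (rule nth_equalityI) auto

lemma adj_carrier[simp]: "K \<in> carrier_mat n m \<Longrightarrow> adj K \<in> carrier_mat m n"
  by (simp add: adj_def)

lemma adj_index: "K \<in> carrier_mat n m \<Longrightarrow> a < m \<Longrightarrow> b < n \<Longrightarrow> adj K $$ (a,b) = cnj (K $$ (b,a))"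
  by (simp add: adj_def)

lemma mult3_index: assumes "K \<in> carrier_mat n n" "\<rho> \<in> carrier_mat n n" "a < n" "b < n"
  shows "(K * \<rho> * adj K) $$ (a,b) = (\<Sum>c<n. \<Sum>e<n. K $$ (a,c) * \<rho> $$ (c,e) * cnj (K $$ (b,e)))"
proof -
  have "(K * \<rho> * adj K) $$ (a,b) = (\<Sum>e<n. (\<Sum>c<n. K $$ (a,c) * \<rho> $$ (c,e)) * cnj (K $$ (b,e)))"
    using assms by (simp add: index_mult_mat scalar_prod_def adj_def atLeast0LessThan)
  also have "\<dots> = (\<Sum>e<n. \<Sum>c<n. K $$ (a,c) * \<rho> $$ (c,e) * cnj (K $$ (b,e)))"
    by (simp add: sum_distrib_right)
  also have "\<dots> = (\<Sum>c<n. \<Sum>e<n. K $$ (a,c) * \<rho> $$ (c,e) * cnj (K $$ (b,e)))"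
    by (rule sum.swap)
  finally show ?thesis .
qed

lemma adjmult_index: assumes "K \<in> carrier_mat n n" "a < n" "b < n"
  shows "(adj K * K) $$ (a,b) = (\<Sum>c<n. cnj (K $$ (c,a)) * K $$ (c,b))"
  using assms by (simp add: index_mult_mat scalar_prod_def adj_def atLeast0LessThan)

lemma sum4_swap: "(\<Sum>c\<in>A. \<Sum>e\<in>B. \<Sum>i\<in>C. \<Sum>j\<in>D. f c e i j) = (\<Sum>i\<in>C. \<Sum>j\<in>D. \<Sum>c\<in>A. \<Sum>e\<in>B. f c e i j)"
proof -
  have 1: "(\<Sum>e\<in>B. \<Sum>i\<in>C. \<Sum>j\<in>D. f c e i j) = (\<Sum>i\<in>C. \<Sum>j\<in>D. \<Sum>e\<in>B. f c e i j)" for c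
  proof -
    have "(\<Sum>e\<in>B. \<Sum>i\<in>C. \<Sum>j\<in>D. f c e i j) = (\<Sum>i\<in>C. \<Sum>e\<in>B. \<Sum>j\<in>D. f c e i j)"
      by (rule sum.swap)
    also have "\<dots> = (\<Sum>i\<in>C. \<Sum>j\<in>D. \<Sum>e\<in>B. f c e i j)"
      by (rule sum.cong[OF refl], rule sum.swap)
    finally show ?thesis .
  qed
  have "(\<Sum>c\<in>A. \<Sum>e\<in>B. \<Sum>i\<in>C. \<Sum>j\<in>D. f c e i j) = (\<Sum>c\<in>A. \<Sum>i\<in>C. \<Sum>j\<in>D. \<Sum>e\<in>B. f c e i j)"
    using 1 by simp
  also have "\<dots> = (\<Sum>i\<in>C. \<Sum>c\<in>A. \<Sum>j\<in>D. \<Sum>e\<in>B. f c e i j)"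
    by (rule sum.swap)
  also have "\<dots> = (\<Sum>i\<in>C. \<Sum>j\<in>D. \<Sum>c\<in>A. \<Sum>e\<in>B. f c e i j)"
    by (rule sum.cong[OF refl], rule sum.swap)
  finally show ?thesis .
qed

lemma sum_deltaL: "finite S \<Longrightarrow> (\<Sum>c\<in>S. (if a = c \<and> P then 1 else 0) * g c) = (if a \<in> S \<and> P then g a else (0::'a::semiring_1))"
proof -
  assume f: "finite S"
  have "(\<Sum>c\<in>S. (if a = c \<and> P then 1 else 0) * g c) = (\<Sum>c\<in>S. if a = c then (if P then g c else 0) else 0)"
    by (intro sum.cong) auto
  then show ?thesis using f by (simp add: sum.delta')
qed

lemma sum_deltaR: "finite S \<Longrightarrow> (\<Sum>c\<in>S. g c * (if c = b \<and> P c then 1 else 0)) = (if b \<in> S \<and> P b then g b else (0::'a::semiring_1))"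
proof -
  assume f: "finite S"
  have "(\<Sum>c\<in>S. g c * (if c = b \<and> P c then 1 else 0)) = (\<Sum>c\<in>S. if c = b then (if P c then g c else 0) else 0)"
    by (intro sum.cong) auto
  then show ?thesis using f by (simp add: sum.delta)
qed

lemma dsum_delta: "c \<in> S \<Longrightarrow> finite S \<Longrightarrow> (\<Sum>i\<in>S. \<Sum>j\<in>S. if i = c \<and> j = c then z else 0) = z"
proof -
  assume c: "c \<in> S" and f: "finite S"
  have "(\<Sum>i\<in>S. \<Sum>j\<in>S. if i = c \<and> j = c then z else 0) = (\<Sum>i\<in>S. if i = c then (\<Sum>j\<in>S. if j = c then z else 0) else 0)"
    by (intro sum.cong) auto
  also have "\<dots> = z" using c f by (simp add: sum.delta)
  finally show ?thesis .
qed

lemma projA_left: assumes "M \<in> carrier_mat (d+v) m"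
  shows "proj_A d v * M = mat (d+v) m (\<lambda>(a,e). if a < d then M $$ (a,e) else 0)"
  by (rule eq_matI) (use assms in \<open>auto simp: index_mult_mat scalar_prod_def proj_A_def atLeast0LessThan[symmetric] sum_deltaL\<close>)

lemma projA_right: assumes "M \<in> carrier_mat m (d+v)"
  shows "M * proj_A d v = mat m (d+v) (\<lambda>(a,e). if e < d then M $$ (a,e) else 0)"
  by (rule eq_matI) (use assms in \<open>auto simp: index_mult_mat scalar_prod_def proj_A_def atLeast0LessThan[symmetric] sum_deltaR\<close>)

lemma projV_left: assumes "M \<in> carrier_mat (d+v) m"
  shows "proj_Vac d v * M = mat (d+v) m (\<lambda>(a,e). if d \<le> a then M $$ (a,e) else 0)"
  by (rule eq_matI) (use assms in \<open>auto simp: index_mult_mat scalar_prod_def proj_Vac_def atLeast0LessThan[symmetric] sum_deltaL\<close>)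

lemma projV_right: assumes "M \<in> carrier_mat m (d+v)"
  shows "M * proj_Vac d v = mat m (d+v) (\<lambda>(a,e). if d \<le> e then M $$ (a,e) else 0)"
  by (rule eq_matI) (use assms in \<open>auto simp: index_mult_mat scalar_prod_def proj_Vac_def atLeast0LessThan[symmetric] sum_deltaR\<close>)

lemma projA_sand: assumes "M \<in> carrier_mat (d+v) (d+v)"
  shows "proj_A d v * M * proj_A d v = mat (d+v) (d+v) (\<lambda>(a,b). if a < d \<and> b < d then M $$ (a,b) else 0)"
proof -
  have "proj_A d v * M = mat (d+v) (d+v) (\<lambda>(a,e). if a < d then M $$ (a,e) else 0)"
    using assms by (rule projA_left)
  moreover have "mat (d+v) (d+v) (\<lambda>(a,e). if a < d then M $$ (a,e) else 0) * proj_A d v = mat (d+v) (d+v) (\<lambda>(a,b). if a < d \<and> b < d then M $$ (a,b) else 0)"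
    by (subst projA_right) (auto intro!: eq_matI)
  ultimately show ?thesis by simp
qed

lemma projV_sand: assumes "M \<in> carrier_mat (d+v) (d+v)"
  shows "proj_Vac d v * M * proj_Vac d v = mat (d+v) (d+v) (\<lambda>(a,b). if d \<le> a \<and> d \<le> b then M $$ (a,b) else 0)"
proof -
  have "proj_Vac d v * M = mat (d+v) (d+v) (\<lambda>(a,e). if d \<le> a then M $$ (a,e) else 0)"
    using assms by (rule projV_left)
  moreover have "mat (d+v) (d+v) (\<lambda>(a,e). if d \<le> a then M $$ (a,e) else 0) * proj_Vac d v = mat (d+v) (d+v) (\<lambda>(a,b). if d \<le> a \<and> d \<le> b then M $$ (a,b) else 0)"
    by (subst projV_right) (auto intro!: eq_matI)
  ultimately show ?thesis by simp
qed

definition unitm :: "nat \<Rightarrow> nat \<Rightarrow> nat \<Rightarrow> complex mat" where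
  "unitm n c e = mat n n (\<lambda>(x,y). if x = c \<and> y = e then 1 else 0)"

lemma unitm_density: assumes "c < n" shows "density n (unitm n c c)"
proof -
  have q: "(\<Sum>i<n. \<Sum>j<n. cnj (x $ i) * unitm n c c $$ (i,j) * x $ j) = cnj (x $ c) * x $ c" for x :: "complex vec"
  proof -
    have "(\<Sum>i<n. \<Sum>j<n. cnj (x $ i) * unitm n c c $$ (i,j) * x $ j) = (\<Sum>i<n. \<Sum>j<n. if i = c \<and> j = c then cnj (x $ c) * x $ c else 0)"
      by (intro sum.cong) (auto simp: unitm_def)
    also have "\<dots> = cnj (x $ c) * x $ c" using assms by (intro dsum_delta) auto
    finally show ?thesis .
  qed
  have "cnj (x $ c) * x $ c = complex_of_real ((Re (x $ c))\<^sup>2 + (Im (x $ c))\<^sup>2)" for x :: "complex vec"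
    by (metis complex_mult_cnj mult.commute)
  then have "Im (cnj (x $ c) * x $ c) = 0 \<and> Re (cnj (x $ c) * x $ c) \<ge> 0" for x :: "complex vec"
    by simp
  moreover have "adj (unitm n c c) = unitm n c c"
    by (rule eq_matI) (auto simp: adj_def unitm_def)
  moreover have "tr (unitm n c c) = 1" using assms by (simp add: tr_def unitm_def)
  ultimately show ?thesis unfolding density_def psd_def using q by (auto simp: unitm_def)
qed


lemma dsum_delta2: "c \<in> S \<Longrightarrow> e \<in> S \<Longrightarrow> finite S \<Longrightarrow> (\<Sum>i\<in>S. \<Sum>j\<in>S. if i = c \<and> j = e then z i j else 0) = z c e"
proof -
  assume c: "c \<in> S" and e: "e \<in> S" and f: "finite S"
  have "(\<Sum>i\<in>S. \<Sum>j\<in>S. if i = c \<and> j = e then z i j else 0) = (\<Sum>i\<in>S. if i = c then (\<Sum>j\<in>S. if j = e then z i j else 0) else 0)"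
    by (intro sum.cong) auto
  also have "\<dots> = z c e" using c e f by (simp add: sum.delta)
  finally show ?thesis .
qed

lemma sum3_swap: "(\<Sum>c\<in>A. \<Sum>i\<in>C. \<Sum>j\<in>D. f c i j) = (\<Sum>i\<in>C. \<Sum>j\<in>D. \<Sum>c\<in>A. f c i j)"
proof -
  have "(\<Sum>c\<in>A. \<Sum>i\<in>C. \<Sum>j\<in>D. f c i j) = (\<Sum>i\<in>C. \<Sum>c\<in>A. \<Sum>j\<in>D. f c i j)"
    by (rule sum.swap)
  also have "\<dots> = (\<Sum>i\<in>C. \<Sum>j\<in>D. \<Sum>c\<in>A. f c i j)"
    by (rule sum.cong[OF refl], rule sum.swap)
  finally show ?thesis .
qed

lemma sand_car: "K \<in> carrier_mat n n \<Longrightarrow> \<rho> \<in> carrier_mat n n \<Longrightarrow> K * \<rho> * adj K \<in> carrier_mat n n"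
  by (auto intro!: mult_carrier_mat)

lemma adjK_car: "K \<in> carrier_mat n n \<Longrightarrow> adj K * K \<in> carrier_mat n n"
  by (auto intro!: mult_carrier_mat)

lemma sum_sq_zero:
  fixes z :: "nat \<Rightarrow> complex"
  assumes "finite S" "(\<Sum>i\<in>S. z i * cnj (z i)) = 0" "i \<in> S"
  shows "z i = 0"
proof -
  have "(\<Sum>i\<in>S. z i * cnj (z i)) = (\<Sum>i\<in>S. complex_of_real ((cmod (z i))\<^sup>2))"
    by (intro sum.cong refl) (rule complex_norm_square[symmetric])
  also have "\<dots> = complex_of_real (\<Sum>i\<in>S. (cmod (z i))\<^sup>2)"
    by (rule of_real_sum[symmetric])
  finally have "(\<Sum>i\<in>S. z i * cnj (z i)) = complex_of_real (\<Sum>i\<in>S. (cmod (z i))\<^sup>2)" .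
  with assms(2) have "complex_of_real (\<Sum>i\<in>S. (cmod (z i))\<^sup>2) = 0" by metis
  then have "(\<Sum>i\<in>S. (cmod (z i))\<^sup>2) = 0" by (simp only: of_real_eq_0_iff)
  with assms have "(cmod (z i))\<^sup>2 = 0" by (simp add: sum_nonneg_eq_0_iff)
  then show ?thesis by simp
qed



lemma kernel_exists:
  fixes cf :: "'e \<Rightarrow> 'u \<Rightarrow> complex"
  assumes fU: "finite U" and fE: "finite Eq" and lt: "card Eq < card U"
  shows "\<exists>y. (\<exists>u\<in>U. y u \<noteq> 0) \<and> (\<forall>e\<in>Eq. (\<Sum>u\<in>U. cf e u * y u) = 0)"
proof -
  define N where "N = card U"
  define M where "M = card Eq"
  obtain f where f: "bij_betw f {0..<N} U" using ex_bij_betw_nat_finite[OF fU] N_def by blast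
  obtain h where h: "bij_betw h {0..<M} Eq" using ex_bij_betw_nat_finite[OF fE] M_def by blast
  have MN: "M < N" using lt M_def N_def by simp
  define A where "A = mat N N (\<lambda>(a,b). if a < M then cf (h a) (f b) else 0)"
  have A: "A \<in> carrier_mat N N" by (simp add: A_def)
  have "A = mat\<^sub>r N N (\<lambda>i. if i = N - 1 then 0\<^sub>v N else row A i)"
    by (rule eq_matI) (use MN in \<open>auto simp: A_def\<close>)
  moreover have "det (mat\<^sub>r N N (\<lambda>i. if i = N - 1 then 0\<^sub>v N else row A i)) = 0"
    using MN by (intro det_row_0) (auto simp: A_def)
  ultimately have "det A = 0" by simp
  then obtain w where w: "w \<in> carrier_vec N" "w \<noteq> 0\<^sub>v N" "A *\<^sub>v w = 0\<^sub>v N"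
    using det_0_iff_vec_prod_zero[OF A] by blast
  define y where "y u = w $ (inv_into {0..<N} f u)" for u
  have yf: "y (f b) = w $ b" if "b < N" for b
    using f that unfolding y_def by (simp add: bij_betw_inv_into_left)
  obtain b where b: "b < N" "w $ b \<noteq> 0" using w by (metis vec_eq_iff index_zero_vec carrier_vecD)
  have "f b \<in> U" using f b by (auto simp: bij_betw_def)
  moreover have "y (f b) \<noteq> 0" using yf b by simp
  moreover have "(\<Sum>u\<in>U. cf e u * y u) = 0" if e: "e \<in> Eq" for e
  proof -
    define a where "a = inv_into {0..<M} h e"
    have a: "a < M" "h a = e" using h e unfolding a_def
      by (auto simp: bij_betw_def inv_into_into f_inv_into_f)
    have "(A *\<^sub>v w) $ a = 0" using w MN a by simp
    moreover have "(A *\<^sub>v w) $ a = (\<Sum>b\<in>{0..<N}. cf e (f b) * w $ b)"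
      using a MN w(1) by (simp add: A_def scalar_prod_def)
    ultimately have "(\<Sum>b\<in>{0..<N}. cf e (f b) * y (f b)) = 0" using yf by simp
    moreover have "(\<Sum>b\<in>{0..<N}. cf e (f b) * y (f b)) = (\<Sum>u\<in>U. cf e u * y u)"
      by (rule sum.reindex_bij_betw[OF f])
    ultimately show ?thesis by simp
  qed
  ultimately show ?thesis by blast
qed



lemma sum_divmod: fixes r :: nat shows "(\<Sum>k<r*r. f (k div r) (k mod r)) = (\<Sum>i<r. \<Sum>j<r. f i j)"
proof -
  have "(\<Sum>k<r*r. f (k div r) (k mod r)) = (\<Sum>m<r. \<Sum>k\<in>{m*r..<m*r+r}. f (k div r) (k mod r))"
    by (rule sum.nat_group[symmetric])
  also have "\<dots> = (\<Sum>m<r. \<Sum>j<r. f m j)"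
  proof (rule sum.cong[OF refl])
    fix m assume "m \<in> {..<r}"
    have "(\<Sum>k\<in>{m*r..<m*r+r}. f (k div r) (k mod r)) = (\<Sum>j\<in>{0..<r}. f ((j + m*r) div r) ((j + m*r) mod r))"
      using sum.shift_bounds_nat_ivl[of "\<lambda>k. f (k div r) (k mod r)" 0 "m*r" r] by (simp add: add.commute)
    also have "\<dots> = (\<Sum>j\<in>{0..<r}. f m j)"
      by (intro sum.cong refl) auto
    finally show "(\<Sum>k\<in>{m*r..<m*r+r}. f (k div r) (k mod r)) = (\<Sum>j<r. f m j)" by (simp add: atLeast0LessThan)
  qed
  finally show ?thesis .
qed

lemma sgn_cmod: "complex_of_real (cmod z) * sgn z = z"
  by (cases "z = 0") (simp_all add: sgn_div_norm scaleR_conv_of_real)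

lemma cnj_sgn: "cnj (sgn z) = sgn (cnj z)"
  by (simp add: sgn_div_norm scaleR_conv_of_real)

lemma gp_expand:
  fixes s :: real and c :: complex and p q i j :: nat
  shows "complex_of_real s * ((if p = i then 1 else 0) + (if p = j then c else 0)) *
         cnj (complex_of_real s * ((if q = i then 1 else 0) + (if q = j then c else 0))) =
         (if i = p \<and> i = q then complex_of_real (s\<^sup>2) else 0)
                      + (if i = p \<and> j = q then complex_of_real (s\<^sup>2) * cnj c else 0)
                      + (if j = p \<and> i = q then complex_of_real (s\<^sup>2) * c else 0)
                      + (if j = p \<and> j = q then complex_of_real (s\<^sup>2 * (cmod c)\<^sup>2) else 0)"
proof -
  have cc: "c * cnj c = complex_of_real ((cmod c)\<^sup>2)" by (rule complex_norm_square[symmetric])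
  show ?thesis
    by (cases "p = i"; cases "p = j"; cases "q = i"; cases "q = j")
       (simp_all add: power2_eq_square algebra_simps cc)
qed

lemma dsumA: "finite S \<Longrightarrow> p \<in> S \<Longrightarrow> (\<Sum>i\<in>S. \<Sum>j\<in>S. if i = p \<and> i = q then f i j else 0) = (if p = q then (\<Sum>j\<in>S. f p j) else (0::'a::comm_monoid_add))"
proof -
  assume fS: "finite S" and p: "p \<in> S"
  have "(\<Sum>i\<in>S. \<Sum>j\<in>S. if i = p \<and> i = q then f i j else 0) = (\<Sum>i\<in>S. if i = p then (if p = q then (\<Sum>j\<in>S. f p j) else 0) else 0)"
    by (intro sum.cong) auto
  then show ?thesis using fS p by (simp add: sum.delta)
qed

lemma dsumB: "finite S \<Longrightarrow> p \<in> S \<Longrightarrow> q \<in> S \<Longrightarrow> (\<Sum>i\<in>S. \<Sum>j\<in>S. if i = p \<and> j = q then f i j else 0) = (f p q::'a::comm_monoid_add)"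
proof -
  assume fS: "finite S" and p: "p \<in> S" and q: "q \<in> S"
  have "(\<Sum>i\<in>S. \<Sum>j\<in>S. if i = p \<and> j = q then f i j else 0) = (\<Sum>i\<in>S. if i = p then (\<Sum>j\<in>S. if j = q then f i j else 0) else 0)"
    by (intro sum.cong) auto
  then show ?thesis using fS p q by (simp add: sum.delta)
qed

lemma dsumC: "finite S \<Longrightarrow> p \<in> S \<Longrightarrow> q \<in> S \<Longrightarrow> (\<Sum>i\<in>S. \<Sum>j\<in>S. if j = p \<and> i = q then f i j else 0) = (f q p::'a::comm_monoid_add)"
proof -
  assume fS: "finite S" and p: "p \<in> S" and q: "q \<in> S"
  have "(\<Sum>i\<in>S. \<Sum>j\<in>S. if j = p \<and> i = q then f i j else 0) = (\<Sum>i\<in>S. if i = q then (\<Sum>j\<in>S. if j = p then f i j else 0) else 0)"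
    by (intro sum.cong) auto
  then show ?thesis using fS p q by (simp add: sum.delta)
qed

lemma dsumD: "finite S \<Longrightarrow> p \<in> S \<Longrightarrow> (\<Sum>i\<in>S. \<Sum>j\<in>S. if j = p \<and> j = q then f i j else 0) = (if p = q then (\<Sum>i\<in>S. f i p) else (0::'a::comm_monoid_add))"
proof -
  assume fS: "finite S" and p: "p \<in> S"
  have "(\<Sum>i\<in>S. \<Sum>j\<in>S. if j = p \<and> j = q then f i j else 0) = (\<Sum>i\<in>S. if p = q then (\<Sum>j\<in>S. if j = p then f i j else 0) else 0)"
    by (intro sum.cong) (auto intro: sum.neutral)
  then show ?thesis using fS p by (cases "p = q") (simp_all add: sum.delta)
qed

lemma gram_decomp:
  fixes X :: "nat \<Rightarrow> nat \<Rightarrow> complex"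
  assumes herm: "\<And>i j. i < r \<Longrightarrow> j < r \<Longrightarrow> X j i = cnj (X i j)"
    and small: "\<And>i. i < r \<Longrightarrow> (\<Sum>j<r. cmod (X i j)) \<le> 1"
  shows "\<exists>L (g :: nat \<Rightarrow> nat \<Rightarrow> complex). \<forall>p<r. \<forall>q<r.
           (\<Sum>k<L. g k p * cnj (g k q)) = (if p = q then 1 else 0) + X p q"
proof -
  define s :: "nat \<Rightarrow> nat \<Rightarrow> real" where "s i j = (if i = j then 0 else sqrt (cmod (X i j) / 2))" for i j
  define c :: "nat \<Rightarrow> nat \<Rightarrow> complex" where "c i j = cnj (sgn (X i j))" for i j
  define D :: "nat \<Rightarrow> real" where "D p = 1 + Re (X p p) - (\<Sum>j<r. (s p j)\<^sup>2) - (\<Sum>i<r. (s i p)\<^sup>2 * (cmod (c i p))\<^sup>2)" for p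
  define Gd :: "nat \<Rightarrow> nat \<Rightarrow> nat \<Rightarrow> complex" where
    "Gd i j p = (if i = j \<and> p = i then complex_of_real (sqrt (D i)) else 0)" for i j p
  define Gp :: "nat \<Rightarrow> nat \<Rightarrow> nat \<Rightarrow> complex" where
    "Gp i j p = complex_of_real (s i j) * ((if p = i then 1 else 0) + (if p = j then c i j else 0))" for i j p
  define g where "g k p = Gd (k div r) (k mod r) p + Gp (k div r) (k mod r) p" for k p
  have s2: "(s i j)\<^sup>2 = (if i = j then 0 else cmod (X i j) / 2)" for i j
    by (simp add: s_def)
  have cabs: "(s i j)\<^sup>2 * (cmod (c i j))\<^sup>2 \<le> cmod (X i j) / 2" for i j
  proof (cases "X i j = 0")
    case True then show ?thesis by (simp add: s_def c_def)
  next
    case False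
    then have "cmod (c i j) = 1" by (simp add: c_def norm_sgn)
    then show ?thesis by (simp add: s2)
  qed
  have Dnn: "D p \<ge> 0" if p: "p < r" for p
  proof -
    have a: "(\<Sum>j<r. (s p j)\<^sup>2) \<le> (\<Sum>j<r. if j = p then 0 else cmod (X p j) / 2)"
      by (intro sum_mono) (auto simp: s2)
    have b: "(\<Sum>i<r. (s i p)\<^sup>2 * (cmod (c i p))\<^sup>2) \<le> (\<Sum>i<r. if i = p then 0 else cmod (X p i) / 2)"
    proof (intro sum_mono)
      fix i assume i: "i \<in> {..<r}"
      show "(s i p)\<^sup>2 * (cmod (c i p))\<^sup>2 \<le> (if i = p then 0 else cmod (X p i) / 2)"
      proof (cases "i = p")
        case True then show ?thesis by (simp add: s_def)
      next
        case False
        have "cmod (X i p) = cmod (X p i)" using herm[of p i] p i by simp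
        then show ?thesis using cabs[of i p] False by simp
      qed
    qed
    have "(\<Sum>j<r. if j = p then 0 else cmod (X p j) / 2) + (\<Sum>j<r. if j = p then 0 else cmod (X p j) / 2)
          = (\<Sum>j<r. if j = p then 0 else cmod (X p j))"
      by (subst sum.distrib[symmetric]) (intro sum.cong, auto)
    also have "\<dots> = (\<Sum>j<r. cmod (X p j)) - cmod (X p p)"
    proof -
      have "(\<Sum>j<r. cmod (X p j)) = (\<Sum>j<r. if j = p then 0 else cmod (X p j)) + (\<Sum>j<r. if j = p then cmod (X p j) else 0)"
        by (subst sum.distrib[symmetric]) (intro sum.cong, auto)
      then show ?thesis using p by simp
    qed
    finally have c: "(\<Sum>j<r. if j = p then 0 else cmod (X p j) / 2) + (\<Sum>j<r. if j = p then 0 else cmod (X p j) / 2)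
          = (\<Sum>j<r. cmod (X p j)) - cmod (X p p)" .
    have "- cmod (X p p) \<le> Re (X p p)" using abs_Re_le_cmod[of "X p p"] by linarith
    then show ?thesis unfolding D_def using a b c small[OF p] by linarith
  qed
  have sqD: "complex_of_real (sqrt (D p)) * cnj (complex_of_real (sqrt (D p))) = complex_of_real (D p)" if "p < r" for p
    using Dnn[OF that] by (simp add: of_real_mult[symmetric] del: of_real_mult)
  have Xreal: "X p p = complex_of_real (Re (X p p))" if "p < r" for p
    using herm[of p p] that by (metis complex_is_Real_iff Reals_cnj_iff of_real_Re)
  show ?thesis
  proof (intro exI allI impI)
    fix p q assume p: "p < r" and q: "q < r"
    have "(\<Sum>k<r*r. g k p * cnj (g k q)) = (\<Sum>i<r. \<Sum>j<r. (Gd i j p + Gp i j p) * cnj (Gd i j q + Gp i j q))"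
      unfolding g_def by (rule sum_divmod)
    also have "\<dots> = (\<Sum>i<r. \<Sum>j<r. Gd i j p * cnj (Gd i j q) + Gp i j p * cnj (Gp i j q))"
    proof (intro sum.cong refl)
      fix i j
      have x1: "Gd i j p * cnj (Gp i j q) = 0"
        by (cases "i = j") (simp_all add: Gd_def Gp_def s_def)
      have x2: "Gp i j p * cnj (Gd i j q) = 0"
        by (cases "i = j") (simp_all add: Gd_def Gp_def s_def)
      have "(Gd i j p + Gp i j p) * cnj (Gd i j q + Gp i j q) = Gd i j p * cnj (Gd i j q) + Gd i j p * cnj (Gp i j q) + Gp i j p * cnj (Gd i j q) + Gp i j p * cnj (Gp i j q)"
        by (simp add: algebra_simps)
      also have "\<dots> = Gd i j p * cnj (Gd i j q) + Gp i j p * cnj (Gp i j q)"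
        unfolding x1 x2 by simp
      finally show "(Gd i j p + Gp i j p) * cnj (Gd i j q + Gp i j q) = Gd i j p * cnj (Gd i j q) + Gp i j p * cnj (Gp i j q)" .
    qed
    also have "\<dots> = (\<Sum>i<r. \<Sum>j<r. Gd i j p * cnj (Gd i j q)) + (\<Sum>i<r. \<Sum>j<r. Gp i j p * cnj (Gp i j q))"
      by (simp add: sum.distrib)
    also have "(\<Sum>i<r. \<Sum>j<r. Gd i j p * cnj (Gd i j q)) = (if p = q then complex_of_real (D p) else 0)"
    proof -
      have "(\<Sum>i<r. \<Sum>j<r. Gd i j p * cnj (Gd i j q)) = (\<Sum>i<r. \<Sum>j<r. if i = p \<and> j = p then (if p = q then complex_of_real (D p) else 0) else 0)"
        using sqD by (intro sum.cong refl) (auto simp: Gd_def)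
      also have "\<dots> = (if p = q then complex_of_real (D p) else 0)"
      proof -
        have "(\<Sum>i<r. \<Sum>j<r. if i = p \<and> j = p then (if p = q then complex_of_real (D p) else 0) else 0)
           = (\<Sum>i<r. if i = p then (\<Sum>j<r. if j = p then (if p = q then complex_of_real (D p) else 0) else 0) else 0)"
          by (intro sum.cong) auto
        then show ?thesis using p by (simp add: sum.delta)
      qed
      finally show ?thesis .
    qed
    also have "(\<Sum>i<r. \<Sum>j<r. Gp i j p * cnj (Gp i j q)) =
        (\<Sum>i<r. \<Sum>j<r. (if i = p \<and> i = q then complex_of_real ((s i j)\<^sup>2) else 0)
                      + (if i = p \<and> j = q then complex_of_real ((s i j)\<^sup>2) * cnj (c i j) else 0)
                      + (if j = p \<and> i = q then complex_of_real ((s i j)\<^sup>2) * c i j else 0)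
                      + (if j = p \<and> j = q then complex_of_real ((s i j)\<^sup>2 * (cmod (c i j))\<^sup>2) else 0))"
    proof (intro sum.cong refl)
      fix i j
      show "Gp i j p * cnj (Gp i j q) = (if i = p \<and> i = q then complex_of_real ((s i j)\<^sup>2) else 0)
                      + (if i = p \<and> j = q then complex_of_real ((s i j)\<^sup>2) * cnj (c i j) else 0)
                      + (if j = p \<and> i = q then complex_of_real ((s i j)\<^sup>2) * c i j else 0)
                      + (if j = p \<and> j = q then complex_of_real ((s i j)\<^sup>2 * (cmod (c i j))\<^sup>2) else 0)"
        unfolding Gp_def by (rule gp_expand)
    qed
    also have "\<dots> = (if p = q then complex_of_real (\<Sum>j<r. (s p j)\<^sup>2) else 0)
                   + complex_of_real ((s p q)\<^sup>2) * cnj (c p q)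
                   + complex_of_real ((s q p)\<^sup>2) * c q p
                   + (if p = q then complex_of_real (\<Sum>i<r. (s i p)\<^sup>2 * (cmod (c i p))\<^sup>2) else 0)"
      using p q by (simp add: sum.distrib dsumA dsumB dsumC dsumD)
    finally have G: "(\<Sum>k<r*r. g k p * cnj (g k q)) = (if p = q then complex_of_real (D p) else 0) + (if p = q then complex_of_real (\<Sum>j<r. (s p j)\<^sup>2) else 0)
                   + complex_of_real ((s p q)\<^sup>2) * cnj (c p q)
                   + complex_of_real ((s q p)\<^sup>2) * c q p
                   + (if p = q then complex_of_real (\<Sum>i<r. (s i p)\<^sup>2 * (cmod (c i p))\<^sup>2) else 0)" by simp
    show "(\<Sum>k<r*r. g k p * cnj (g k q)) = (if p = q then 1 else 0) + X p q"
    proof (cases "p = q")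
      case True
      then show ?thesis unfolding G using Xreal[OF p] by (simp add: D_def s_def)
    next
      case False
      have h1: "complex_of_real ((s p q)\<^sup>2) * cnj (c p q) = X p q / 2"
        using False sgn_cmod[of "X p q"] by (simp add: s2 c_def)
      have h2: "complex_of_real ((s q p)\<^sup>2) * c q p = X p q / 2"
        using False sgn_cmod[of "X p q"] herm[OF p q] by (simp add: s2 c_def cnj_sgn)
      have "(\<Sum>k<r*r. g k p * cnj (g k q)) = X p q / 2 + X p q / 2"
        unfolding G h1 h2 using False by simp
      then show ?thesis using False by simp
    qed
  qed
qed


definition emb :: "nat \<Rightarrow> nat \<Rightarrow> complex mat \<Rightarrow> complex mat" where
  "emb d v \<rho> = mat (d+v) (d+v) (\<lambda>(a,b). if a < d \<and> b < d then \<rho> $$ (a,b) else 0)"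

lemma sum_restrict: fixes d n :: nat assumes "d \<le> n" "\<And>c. d \<le> c \<Longrightarrow> c < n \<Longrightarrow> f c = 0"
  shows "(\<Sum>c<n. f c) = (\<Sum>c<d. (f c :: 'a :: comm_monoid_add))"
proof (rule sum.mono_neutral_right)
  show "finite {..<n}" by simp
  show "{..<d} \<subseteq> {..<n}" using assms by auto
  show "\<forall>i\<in>{..<n} - {..<d}. f i = 0" using assms by auto
qed

lemma blockA_car[simp]: "blockA d K \<in> carrier_mat d d"
  by (simp add: blockA_def)

lemma restr:
  assumes Ns: "\<forall>K\<in>set Ns. K \<in> carrier_mat (d+v) (d+v)" and \<rho>: "\<rho> \<in> carrier_mat d d"
  shows "msum d (map (\<lambda>K. blockA d K * \<rho> * adj (blockA d K)) Ns) = blockA d (msum (d+v) (map (\<lambda>K. K * emb d v \<rho> * adj K) Ns))"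
proof (rule eq_matI)
  have c1: "\<forall>M\<in>set (map (\<lambda>K. blockA d K * \<rho> * adj (blockA d K)) Ns). M \<in> carrier_mat d d"
    using \<rho> by (auto intro!: sand_car)
  have embc: "emb d v \<rho> \<in> carrier_mat (d+v) (d+v)" by (simp add: emb_def)
  have c2: "\<forall>M\<in>set (map (\<lambda>K. K * emb d v \<rho> * adj K) Ns). M \<in> carrier_mat (d+v) (d+v)"
    using Ns embc by (auto intro!: sand_car)
  show "dim_row (msum d (map (\<lambda>K. blockA d K * \<rho> * adj (blockA d K)) Ns)) = dim_row (blockA d (msum (d+v) (map (\<lambda>K. K * emb d v \<rho> * adj K) Ns)))"
    using msum_carrier[OF c1] by (simp add: blockA_def)
  show "dim_col (msum d (map (\<lambda>K. blockA d K * \<rho> * adj (blockA d K)) Ns)) = dim_col (blockA d (msum (d+v) (map (\<lambda>K. K * emb d v \<rho> * adj K) Ns)))"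
    using msum_carrier[OF c1] by (simp add: blockA_def)
  fix a b assume "a < dim_row (blockA d (msum (d+v) (map (\<lambda>K. K * emb d v \<rho> * adj K) Ns)))"
    "b < dim_col (blockA d (msum (d+v) (map (\<lambda>K. K * emb d v \<rho> * adj K) Ns)))"
  then have a: "a < d" and b: "b < d" by (auto simp: blockA_def)
  have "msum d (map (\<lambda>K. blockA d K * \<rho> * adj (blockA d K)) Ns) $$ (a,b) = (\<Sum>K\<leftarrow>Ns. (blockA d K * \<rho> * adj (blockA d K)) $$ (a,b))"
    using c1 a b by (subst msum_index) (auto simp: comp_def)
  also have "\<dots> = (\<Sum>K\<leftarrow>Ns. (K * emb d v \<rho> * adj K) $$ (a,b))"
  proof (intro arg_cong[where f = sum_list] map_cong refl)
    fix K assume K: "K \<in> set Ns"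
    then have Kc: "K \<in> carrier_mat (d+v) (d+v)" using Ns by auto
    have "(blockA d K * \<rho> * adj (blockA d K)) $$ (a,b) = (\<Sum>c<d. \<Sum>e<d. K $$ (a,c) * \<rho> $$ (c,e) * cnj (K $$ (b,e)))"
      using a b \<rho> by (subst mult3_index[of _ d]) (auto simp: blockA_def)
    also have "\<dots> = (\<Sum>c<d. \<Sum>e<d+v. K $$ (a,c) * emb d v \<rho> $$ (c,e) * cnj (K $$ (b,e)))"
    proof (rule sum.cong[OF refl])
      fix c assume "c \<in> {..<d}"
      then have c: "c < d" by simp
      have "(\<Sum>e<d+v. K $$ (a,c) * emb d v \<rho> $$ (c,e) * cnj (K $$ (b,e))) = (\<Sum>e<d. K $$ (a,c) * emb d v \<rho> $$ (c,e) * cnj (K $$ (b,e)))"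
        using c by (intro sum_restrict) (auto simp: emb_def)
      also have "\<dots> = (\<Sum>e<d. K $$ (a,c) * \<rho> $$ (c,e) * cnj (K $$ (b,e)))"
        using c by (intro sum.cong refl) (auto simp: emb_def)
      finally show "(\<Sum>e<d. K $$ (a,c) * \<rho> $$ (c,e) * cnj (K $$ (b,e))) = (\<Sum>e<d+v. K $$ (a,c) * emb d v \<rho> $$ (c,e) * cnj (K $$ (b,e)))" by simp
    qed
    also have "\<dots> = (\<Sum>c<d+v. \<Sum>e<d+v. K $$ (a,c) * emb d v \<rho> $$ (c,e) * cnj (K $$ (b,e)))"
      by (rule sum_restrict[symmetric]) (auto simp: emb_def intro!: sum.neutral)
    also have "\<dots> = (K * emb d v \<rho> * adj K) $$ (a,b)"
      using a b Kc embc by (subst mult3_index) auto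
    finally show "(blockA d K * \<rho> * adj (blockA d K)) $$ (a,b) = (K * emb d v \<rho> * adj K) $$ (a,b)" .
  qed
  also have "\<dots> = msum (d+v) (map (\<lambda>K. K * emb d v \<rho> * adj K) Ns) $$ (a,b)"
    using c2 a b by (subst msum_index) (auto simp: comp_def)
  also have "\<dots> = blockA d (msum (d+v) (map (\<lambda>K. K * emb d v \<rho> * adj K) Ns)) $$ (a,b)"
    using a b by (simp add: blockA_def)
  finally show "msum d (map (\<lambda>K. blockA d K * \<rho> * adj (blockA d K)) Ns) $$ (a,b) = blockA d (msum (d+v) (map (\<lambda>K. K * emb d v \<rho> * adj K) Ns)) $$ (a,b)" .
qed

locale vx =
  fixes d v :: nat and Ks :: "complex mat list" and E :: "complex mat \<Rightarrow> complex mat"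
  assumes kr: "kraus_rep (d+v) Ks E" and nl: "no_leakage d v E" and li: "lin_indep_mats (d+v) Ks"
begin

definition F where "F i j \<rho> a b = (\<Sum>c<d+v. \<Sum>e<d+v. Ks!i $$ (a,c) * \<rho> $$ (c,e) * cnj (Ks!j $$ (b,e)))"
definition H where "H i j a b = (\<Sum>c<d+v. cnj (Ks!i $$ (c,a)) * Ks!j $$ (c,b))"
definition Mg where "Mg g = mat (d+v) (d+v) (\<lambda>(a,c). \<Sum>i<length Ks. g i * Ks!i $$ (a,c))"

lemma Kcar: "i < length Ks \<Longrightarrow> Ks!i \<in> carrier_mat (d+v) (d+v)"
  using kr unfolding kraus_rep_def by auto

lemma E_eq: "\<rho> \<in> carrier_mat (d+v) (d+v) \<Longrightarrow> E \<rho> = msum (d+v) (map (\<lambda>i. Ks!i * \<rho> * adj (Ks!i)) [0..<length Ks])"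
  using kr map_via_nth[of "\<lambda>K. K * \<rho> * adj K" Ks] unfolding kraus_rep_def by auto

lemma E_car: "\<rho> \<in> carrier_mat (d+v) (d+v) \<Longrightarrow> E \<rho> \<in> carrier_mat (d+v) (d+v)"
  by (simp add: E_eq) (intro msum_upt_carrier, use Kcar sand_car in auto)

lemma E_entry: "\<rho> \<in> carrier_mat (d+v) (d+v) \<Longrightarrow> a < d+v \<Longrightarrow> b < d+v \<Longrightarrow> E \<rho> $$ (a,b) = (\<Sum>i<length Ks. F i i \<rho> a b)"
  by (simp add: E_eq, subst msum_upt) (use Kcar sand_car in \<open>auto simp: mult3_index F_def intro!: sum.cong\<close>)

lemma TP_entry: "a < d+v \<Longrightarrow> b < d+v \<Longrightarrow> (\<Sum>i<length Ks. H i i a b) = (if a = b then 1 else 0)"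
proof -
  assume ab: "a < d+v" "b < d+v"
  have "msum (d+v) (map (\<lambda>i. adj (Ks!i) * Ks!i) [0..<length Ks]) = 1\<^sub>m (d+v)"
    using kr map_via_nth[of "\<lambda>K. adj K * K" Ks] unfolding kraus_rep_def by auto
  then have "msum (d+v) (map (\<lambda>i. adj (Ks!i) * Ks!i) [0..<length Ks]) $$ (a,b) = (if a = b then 1 else 0)"
    using ab by simp
  moreover have "msum (d+v) (map (\<lambda>i. adj (Ks!i) * Ks!i) [0..<length Ks]) $$ (a,b) = (\<Sum>i<length Ks. H i i a b)"
    by (subst msum_upt) (use Kcar ab adjK_car in \<open>auto simp: adjmult_index H_def intro!: sum.cong\<close>)
  ultimately show ?thesis by simp
qed

lemma Mg_car[simp]: "Mg g \<in> carrier_mat (d+v) (d+v)"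
  by (simp add: Mg_def)

lemma Mg_sand: assumes "\<rho> \<in> carrier_mat (d+v) (d+v)" "a < d+v" "b < d+v"
  shows "(Mg g * \<rho> * adj (Mg g)) $$ (a,b) = (\<Sum>i<length Ks. \<Sum>j<length Ks. g i * cnj (g j) * F i j \<rho> a b)"
proof -
  have "(Mg g * \<rho> * adj (Mg g)) $$ (a,b) = (\<Sum>c<d+v. \<Sum>e<d+v. (\<Sum>i<length Ks. g i * Ks!i $$ (a,c)) * \<rho> $$ (c,e) * cnj (\<Sum>j<length Ks. g j * Ks!j $$ (b,e)))"
    using assms by (subst mult3_index[OF Mg_car assms]) (simp add: Mg_def)
  also have "\<dots> = (\<Sum>c<d+v. \<Sum>e<d+v. \<Sum>i<length Ks. \<Sum>j<length Ks. g i * cnj (g j) * (Ks!i $$ (a,c) * \<rho> $$ (c,e) * cnj (Ks!j $$ (b,e))))"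
    by (simp add: cnj_sum sum_distrib_left sum_distrib_right mult_ac)
  also have "\<dots> = (\<Sum>i<length Ks. \<Sum>j<length Ks. \<Sum>c<d+v. \<Sum>e<d+v. g i * cnj (g j) * (Ks!i $$ (a,c) * \<rho> $$ (c,e) * cnj (Ks!j $$ (b,e))))"
    by (rule sum4_swap)
  also have "\<dots> = (\<Sum>i<length Ks. \<Sum>j<length Ks. g i * cnj (g j) * F i j \<rho> a b)"
    by (simp add: F_def sum_distrib_left)
  finally show ?thesis .
qed

lemma Mg_adj: assumes "a < d+v" "b < d+v"
  shows "(adj (Mg g) * Mg g) $$ (a,b) = (\<Sum>i<length Ks. \<Sum>j<length Ks. cnj (g i) * g j * H i j a b)"
proof -
  have "(adj (Mg g) * Mg g) $$ (a,b) = (\<Sum>c<d+v. cnj (\<Sum>i<length Ks. g i * Ks!i $$ (c,a)) * (\<Sum>j<length Ks. g j * Ks!j $$ (c,b)))"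
    using assms by (subst adjmult_index[OF Mg_car assms]) (simp add: Mg_def)
  also have "\<dots> = (\<Sum>c<d+v. \<Sum>i<length Ks. \<Sum>j<length Ks. cnj (g i) * g j * (cnj (Ks!i $$ (c,a)) * Ks!j $$ (c,b)))"
    by (simp add: cnj_sum sum_distrib_left sum_distrib_right mult_ac)
  also have "\<dots> = (\<Sum>i<length Ks. \<Sum>j<length Ks. \<Sum>c<d+v. cnj (g i) * g j * (cnj (Ks!i $$ (c,a)) * Ks!j $$ (c,b)))"
    by (rule sum3_swap)
  also have "\<dots> = (\<Sum>i<length Ks. \<Sum>j<length Ks. cnj (g i) * g j * H i j a b)"
    by (simp add: H_def sum_distrib_left)
  finally show ?thesis .
qed

lemma F_unit: assumes "c < d+v" "e < d+v"
  shows "F i j (unitm (d+v) c e) a b = Ks!i $$ (a,c) * cnj (Ks!j $$ (b,e))"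
proof -
  have "F i j (unitm (d+v) c e) a b = (\<Sum>c'<d+v. \<Sum>e'<d+v. if c' = c \<and> e' = e then Ks!i $$ (a,c') * cnj (Ks!j $$ (b,e')) else 0)"
    unfolding F_def by (intro sum.cong) (auto simp: unitm_def)
  also have "\<dots> = Ks!i $$ (a,c) * cnj (Ks!j $$ (b,e))"
    using assms by (intro dsum_delta2) auto
  finally show ?thesis .
qed

lemma blk1: assumes i: "i < length Ks" and c: "c < d" and a: "d \<le> a" "a < d+v"
  shows "Ks!i $$ (a,c) = 0"
proof -
  let ?\<rho> = "unitm (d+v) c c"
  have car: "?\<rho> \<in> carrier_mat (d+v) (d+v)" by (simp add: unitm_def)
  have den: "density (d+v) ?\<rho>" using c by (intro unitm_density) auto
  have "proj_A d v * ?\<rho> * proj_A d v = ?\<rho>"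
    using c by (subst projA_sand[OF car]) (auto intro!: eq_matI simp: unitm_def)
  with nl den have eq: "proj_A d v * E ?\<rho> * proj_A d v = E ?\<rho>" unfolding no_leakage_def by blast
  have "(proj_A d v * E ?\<rho> * proj_A d v) $$ (a,a) = 0"
    using a by (subst projA_sand[OF E_car[OF car]]) auto
  with eq have "E ?\<rho> $$ (a,a) = 0" by simp
  then have "(\<Sum>i<length Ks. Ks!i $$ (a,c) * cnj (Ks!i $$ (a,c))) = 0"
    using a c by (simp add: E_entry[OF car] F_unit)
  then show ?thesis using i by (intro sum_sq_zero[of "{..<length Ks}" "\<lambda>i. Ks!i $$ (a,c)"]) auto
qed

lemma blk2: assumes i: "i < length Ks" and c: "d \<le> c" "c < d+v" and a: "a < d"
  shows "Ks!i $$ (a,c) = 0"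
proof -
  let ?\<rho> = "unitm (d+v) c c"
  have car: "?\<rho> \<in> carrier_mat (d+v) (d+v)" by (simp add: unitm_def)
  have den: "density (d+v) ?\<rho>" using c by (intro unitm_density) auto
  have "proj_Vac d v * ?\<rho> * proj_Vac d v = ?\<rho>"
    using c by (subst projV_sand[OF car]) (auto intro!: eq_matI simp: unitm_def)
  with nl den have eq: "proj_Vac d v * E ?\<rho> * proj_Vac d v = E ?\<rho>" unfolding no_leakage_def by blast
  have "(proj_Vac d v * E ?\<rho> * proj_Vac d v) $$ (a,a) = 0"
    using a by (subst projV_sand[OF E_car[OF car]]) auto
  with eq have "E ?\<rho> $$ (a,a) = 0" by simp
  then have "(\<Sum>i<length Ks. Ks!i $$ (a,c) * cnj (Ks!i $$ (a,c))) = 0"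
    using a c by (simp add: E_entry[OF car] F_unit)
  then show ?thesis using i by (intro sum_sq_zero[of "{..<length Ks}" "\<lambda>i. Ks!i $$ (a,c)"]) auto
qed


definition Zs where "Zs = {i. i < length Ks \<and> blockA d (Ks!i) = 0\<^sub>m d d}"

lemma Zblk: assumes "i \<in> Zs" "a < d" "c < d" shows "Ks!i $$ (a,c) = 0"
proof -
  have "blockA d (Ks!i) $$ (a,c) = 0" using assms by (simp add: Zs_def)
  then show ?thesis using assms by (simp add: blockA_def)
qed

lemma Mg_blk1: assumes "c < d" "d \<le> a" "a < d+v" shows "Mg g $$ (a,c) = 0"
  using assms by (auto simp: Mg_def blk1 intro!: sum.neutral)

lemma Mg_blk2: assumes "a < d" "d \<le> c" "c < d+v" shows "Mg g $$ (a,c) = 0"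
  using assms by (auto simp: Mg_def blk2 intro!: sum.neutral)

definition Pm where "Pm g L \<rho> = msum (d+v) (map (\<lambda>k. Mg (g k) * \<rho> * adj (Mg (g k))) [0..<L])"

lemma Pm_car: "\<rho> \<in> carrier_mat (d+v) (d+v) \<Longrightarrow> Pm g L \<rho> \<in> carrier_mat (d+v) (d+v)"
  unfolding Pm_def by (intro msum_upt_carrier sand_car Mg_car)

lemma Pm_entry0: assumes "\<rho> \<in> carrier_mat (d+v) (d+v)" "a < d+v" "b < d+v"
  shows "Pm g L \<rho> $$ (a,b) = (\<Sum>k<L. (Mg (g k) * \<rho> * adj (Mg (g k))) $$ (a,b))"
  unfolding Pm_def using assms by (subst msum_upt) (auto intro!: sand_car)

lemma sum_delta1: "finite S \<Longrightarrow> (\<Sum>j\<in>S. (if i = j then 1 else 0) * f j) = (if i \<in> S then f i else (0::'b::semiring_1))"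
proof -
  assume "finite S"
  moreover have "(\<Sum>j\<in>S. (if i = j then 1 else 0) * f j) = (\<Sum>j\<in>S. if i = j then f j else 0)"
    by (intro sum.cong) auto
  ultimately show ?thesis by (simp add: sum.delta')
qed

lemma Pm_gram:
  assumes gram: "\<forall>p<length Ks. \<forall>q<length Ks. (\<Sum>k<L. g k p * cnj (g k q)) = (if p = q then 1 else 0) + Y p q"
    and \<rho>: "\<rho> \<in> carrier_mat (d+v) (d+v)" and ab: "a < d+v" "b < d+v"
  shows "Pm g L \<rho> $$ (a,b) = E \<rho> $$ (a,b) + (\<Sum>i<length Ks. \<Sum>j<length Ks. Y i j * F i j \<rho> a b)"
proof -
  have "Pm g L \<rho> $$ (a,b) = (\<Sum>k<L. \<Sum>i<length Ks. \<Sum>j<length Ks. g k i * cnj (g k j) * F i j \<rho> a b)"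
    using assms by (simp add: Pm_entry0 Mg_sand)
  also have "\<dots> = (\<Sum>i<length Ks. \<Sum>j<length Ks. \<Sum>k<L. g k i * cnj (g k j) * F i j \<rho> a b)"
    by (rule sum3_swap)
  also have "\<dots> = (\<Sum>i<length Ks. \<Sum>j<length Ks. ((if i = j then 1 else 0) + Y i j) * F i j \<rho> a b)"
    using gram by (intro sum.cong refl) (simp add: sum_distrib_right[symmetric])
  also have "\<dots> = (\<Sum>i<length Ks. \<Sum>j<length Ks. (if i = j then 1 else 0) * F i j \<rho> a b) + (\<Sum>i<length Ks. \<Sum>j<length Ks. Y i j * F i j \<rho> a b)"
    by (simp add: distrib_right sum.distrib)
  also have "(\<Sum>i<length Ks. \<Sum>j<length Ks. (if i = j then 1 else 0) * F i j \<rho> a b) = (\<Sum>i<length Ks. F i i \<rho> a b)"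
    by (intro sum.cong refl) (simp add: sum_delta1)
  also have "\<dots> = E \<rho> $$ (a,b)" using assms by (simp add: E_entry)
  finally show ?thesis .
qed

lemma Pm_TP:
  assumes gram: "\<forall>p<length Ks. \<forall>q<length Ks. (\<Sum>k<L. g k p * cnj (g k q)) = (if p = q then 1 else 0) + Y p q"
    and ab: "a < d+v" "b < d+v"
  shows "msum (d+v) (map (\<lambda>k. adj (Mg (g k)) * Mg (g k)) [0..<L]) $$ (a,b) = (if a = b then 1 else 0) + (\<Sum>i<length Ks. \<Sum>j<length Ks. cnj (Y i j) * H i j a b)"
proof -
  have "msum (d+v) (map (\<lambda>k. adj (Mg (g k)) * Mg (g k)) [0..<L]) $$ (a,b) = (\<Sum>k<L. \<Sum>i<length Ks. \<Sum>j<length Ks. cnj (g k i) * g k j * H i j a b)"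
    using ab by (subst msum_upt) (auto intro!: adjK_car simp: Mg_adj)
  also have "\<dots> = (\<Sum>i<length Ks. \<Sum>j<length Ks. \<Sum>k<L. cnj (g k i) * g k j * H i j a b)"
    by (rule sum3_swap)
  also have "\<dots> = (\<Sum>i<length Ks. \<Sum>j<length Ks. ((if i = j then 1 else 0) + cnj (Y i j)) * H i j a b)"
  proof (intro sum.cong refl)
    fix i j assume i: "i \<in> {..<length Ks}" and j: "j \<in> {..<length Ks}"
    have "(\<Sum>k<L. cnj (g k i) * g k j) = cnj (\<Sum>k<L. g k i * cnj (g k j))"
      by (simp add: cnj_sum)
    also have "\<dots> = (if i = j then 1 else 0) + cnj (Y i j)" using gram i j by simp
    finally show "(\<Sum>k<L. cnj (g k i) * g k j * H i j a b) = ((if i = j then 1 else 0) + cnj (Y i j)) * H i j a b"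
      by (simp add: sum_distrib_right[symmetric])
  qed
  also have "\<dots> = (\<Sum>i<length Ks. \<Sum>j<length Ks. (if i = j then 1 else 0) * H i j a b) + (\<Sum>i<length Ks. \<Sum>j<length Ks. cnj (Y i j) * H i j a b)"
    by (simp add: distrib_right sum.distrib)
  also have "(\<Sum>i<length Ks. \<Sum>j<length Ks. (if i = j then 1 else 0) * H i j a b) = (\<Sum>i<length Ks. H i i a b)"
    by (intro sum.cong refl) (simp add: sum_delta1)
  also have "\<dots> = (if a = b then 1 else 0)" using ab by (simp add: TP_entry)
  finally show ?thesis .
qed

lemma Mg_sandA: assumes \<rho>: "\<rho> \<in> carrier_mat (d+v) (d+v)"
  and z: "\<And>c e. c < d+v \<Longrightarrow> e < d+v \<Longrightarrow> \<not> (c < d \<and> e < d) \<Longrightarrow> \<rho> $$ (c,e) = 0"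
  and ab: "a < d+v" "b < d+v" "\<not> (a < d \<and> b < d)"
  shows "(Mg g * \<rho> * adj (Mg g)) $$ (a,b) = 0"
proof -
  have "(Mg g * \<rho> * adj (Mg g)) $$ (a,b) = (\<Sum>c<d+v. \<Sum>e<d+v. Mg g $$ (a,c) * \<rho> $$ (c,e) * cnj (Mg g $$ (b,e)))"
    using ab \<rho> by (intro mult3_index) auto
  also have "\<dots> = 0"
  proof (intro sum.neutral ballI)
    fix c e assume c: "c \<in> {..<d+v}" and e: "e \<in> {..<d+v}"
    show "Mg g $$ (a,c) * \<rho> $$ (c,e) * cnj (Mg g $$ (b,e)) = 0"
    proof (cases "c < d \<and> e < d")
      case True
      then have "Mg g $$ (a,c) = 0 \<or> Mg g $$ (b,e) = 0" using ab Mg_blk1 by (meson not_le)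
      then show ?thesis by auto
    next
      case False
      then show ?thesis using z c e by auto
    qed
  qed
  finally show ?thesis .
qed

lemma Mg_sandV: assumes \<rho>: "\<rho> \<in> carrier_mat (d+v) (d+v)"
  and z: "\<And>c e. c < d+v \<Longrightarrow> e < d+v \<Longrightarrow> \<not> (d \<le> c \<and> d \<le> e) \<Longrightarrow> \<rho> $$ (c,e) = 0"
  and ab: "a < d+v" "b < d+v" "\<not> (d \<le> a \<and> d \<le> b)"
  shows "(Mg g * \<rho> * adj (Mg g)) $$ (a,b) = 0"
proof -
  have "(Mg g * \<rho> * adj (Mg g)) $$ (a,b) = (\<Sum>c<d+v. \<Sum>e<d+v. Mg g $$ (a,c) * \<rho> $$ (c,e) * cnj (Mg g $$ (b,e)))"
    using ab \<rho> by (intro mult3_index) auto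
  also have "\<dots> = 0"
  proof (intro sum.neutral ballI)
    fix c e assume c: "c \<in> {..<d+v}" and e: "e \<in> {..<d+v}"
    show "Mg g $$ (a,c) * \<rho> $$ (c,e) * cnj (Mg g $$ (b,e)) = 0"
    proof (cases "d \<le> c \<and> d \<le> e")
      case True
      have "a < d \<or> b < d" using ab(3) by auto
      then have "Mg g $$ (a,c) = 0 \<or> Mg g $$ (b,e) = 0" using True c e Mg_blk2 by auto
      then show ?thesis by auto
    next
      case False
      then show ?thesis using z c e by auto
    qed
  qed
  finally show ?thesis .
qed

lemma F_Z: assumes "i \<in> Zs \<or> j \<in> Zs" "a < d" "b < d"
  shows "F i j (emb d v \<rho>) a b = 0"
  unfolding F_def
proof (intro sum.neutral ballI)
  fix c e assume c: "c \<in> {..<d+v}" and e: "e \<in> {..<d+v}"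
  show "Ks!i $$ (a,c) * emb d v \<rho> $$ (c,e) * cnj (Ks!j $$ (b,e)) = 0"
  proof (cases "c < d \<and> e < d")
    case True
    then show ?thesis using assms Zblk by auto
  next
    case False
    then show ?thesis using c e by (auto simp: emb_def)
  qed
qed

lemma H_zero: assumes "i \<in> Zs \<or> j \<in> Zs" "i < length Ks" "j < length Ks" "a < d+v" "b < d+v" "\<not> (d \<le> a \<and> d \<le> b)"
  shows "H i j a b = 0"
  unfolding H_def
proof (intro sum.neutral ballI)
  fix c assume c: "c \<in> {..<d+v}"
  show "cnj (Ks!i $$ (c,a)) * Ks!j $$ (c,b) = 0"
    using assms c by (cases "c < d"; cases "a < d"; cases "b < d") (auto simp: blk1 blk2 Zblk)
qed

lemma fullker:
  assumes supp: "\<forall>i<length Ks. \<forall>j<length Ks. Y i j \<noteq> 0 \<longrightarrow> i \<in> Zs \<or> j \<in> Zs"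
    and ker: "\<forall>p q. d \<le> p \<longrightarrow> p < d+v \<longrightarrow> d \<le> q \<longrightarrow> q < d+v \<longrightarrow> (\<Sum>i<length Ks. \<Sum>j<length Ks. cnj (Y i j) * H i j p q) = 0"
    and ab: "a < d+v" "b < d+v"
  shows "(\<Sum>i<length Ks. \<Sum>j<length Ks. cnj (Y i j) * H i j a b) = 0"
proof (cases "d \<le> a \<and> d \<le> b")
  case True then show ?thesis using ker ab by auto
next
  case False
  show ?thesis
  proof (intro sum.neutral ballI)
    fix i j assume i: "i \<in> {..<length Ks}" and j: "j \<in> {..<length Ks}"
    show "cnj (Y i j) * H i j a b = 0"
    proof (cases "Y i j = 0")
      case True then show ?thesis by simp
    next
      case False
      then have "i \<in> Zs \<or> j \<in> Zs" using supp i j by auto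
      then show ?thesis using H_zero[of i j a b] i j ab \<open>\<not> (d \<le> a \<and> d \<le> b)\<close> by auto
    qed
  qed
qed

lemma pert_ve:
  assumes ve: "vacuum_extension d v C E"
    and gram: "\<forall>p<length Ks. \<forall>q<length Ks. (\<Sum>k<L. g k p * cnj (g k q)) = (if p = q then 1 else 0) + Y p q"
    and supp: "\<forall>i<length Ks. \<forall>j<length Ks. Y i j \<noteq> 0 \<longrightarrow> i \<in> Zs \<or> j \<in> Zs"
    and ker: "\<forall>p q. d \<le> p \<longrightarrow> p < d+v \<longrightarrow> d \<le> q \<longrightarrow> q < d+v \<longrightarrow> (\<Sum>i<length Ks. \<Sum>j<length Ks. cnj (Y i j) * H i j p q) = 0"
  shows "vacuum_extension d v C (Pm g L)"
proof -
  let ?Ms = "map (\<lambda>k. Mg (g k)) [0..<L]"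
  have kr2: "kraus_rep (d+v) ?Ms (Pm g L)"
    unfolding kraus_rep_def
  proof (intro conjI ballI)
    show "K \<in> carrier_mat (d+v) (d+v)" if "K \<in> set ?Ms" for K using that by auto
    have "map (\<lambda>K. adj K * K) ?Ms = map (\<lambda>k. adj (Mg (g k)) * Mg (g k)) [0..<L]" by simp
    moreover have "msum (d+v) (map (\<lambda>k. adj (Mg (g k)) * Mg (g k)) [0..<L]) = 1\<^sub>m (d+v)"
    proof (rule eq_matI)
      show "dim_row (msum (d+v) (map (\<lambda>k. adj (Mg (g k)) * Mg (g k)) [0..<L])) = dim_row (1\<^sub>m (d+v))"
        using msum_upt_carrier[of L "\<lambda>k. adj (Mg (g k)) * Mg (g k)" "d+v"] adjK_car[OF Mg_car] by auto
      show "dim_col (msum (d+v) (map (\<lambda>k. adj (Mg (g k)) * Mg (g k)) [0..<L])) = dim_col (1\<^sub>m (d+v))"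
        using msum_upt_carrier[of L "\<lambda>k. adj (Mg (g k)) * Mg (g k)" "d+v"] adjK_car[OF Mg_car] by auto
      fix a b assume "a < dim_row (1\<^sub>m (d+v))" "b < dim_col (1\<^sub>m (d+v))"
      then have ab: "a < d+v" "b < d+v" by auto
      show "msum (d+v) (map (\<lambda>k. adj (Mg (g k)) * Mg (g k)) [0..<L]) $$ (a,b) = 1\<^sub>m (d+v) $$ (a,b)"
        using Pm_TP[OF gram ab] fullker[OF supp ker ab] ab by simp
    qed
    ultimately show "msum (d+v) (map (\<lambda>K. adj K * K) ?Ms) = 1\<^sub>m (d+v)" by (simp add: comp_def)
    show "Pm g L \<rho> = msum (d+v) (map (\<lambda>K. K * \<rho> * adj K) ?Ms)" for \<rho>
      by (simp add: Pm_def comp_def)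
  qed
  have nl2: "no_leakage d v (Pm g L)"
    unfolding no_leakage_def
  proof (intro conjI allI impI)
    fix \<rho> assume h: "density (d+v) \<rho> \<and> proj_A d v * \<rho> * proj_A d v = \<rho>"
    then have \<rho>: "\<rho> \<in> carrier_mat (d+v) (d+v)" by (simp add: density_def psd_def)
    have z: "\<rho> $$ (c,e) = 0" if "c < d+v" "e < d+v" "\<not> (c < d \<and> e < d)" for c e
    proof -
      have "\<rho> $$ (c,e) = (proj_A d v * \<rho> * proj_A d v) $$ (c,e)" using h by simp
      also have "\<dots> = 0" using that by (subst projA_sand[OF \<rho>]) auto
      finally show ?thesis .
    qed
    show "proj_A d v * Pm g L \<rho> * proj_A d v = Pm g L \<rho>"
    proof (subst projA_sand[OF Pm_car[OF \<rho>]], rule eq_matI)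
      fix a b assume "a < dim_row (Pm g L \<rho>)" "b < dim_col (Pm g L \<rho>)"
      then have ab: "a < d+v" "b < d+v" using Pm_car[OF \<rho>, of g L] by auto
      show "mat (d+v) (d+v) (\<lambda>(a,b). if a < d \<and> b < d then Pm g L \<rho> $$ (a,b) else 0) $$ (a,b) = Pm g L \<rho> $$ (a,b)"
      proof (cases "a < d \<and> b < d")
        case True then show ?thesis using ab by simp
      next
        case False
        have "Pm g L \<rho> $$ (a,b) = 0"
          using ab \<rho> Mg_sandA[OF \<rho> z ab False] by (simp add: Pm_entry0)
        then show ?thesis using ab False by simp
      qed
    qed (use Pm_car[OF \<rho>, of g L] in auto)
  next
    fix \<rho> assume h: "density (d+v) \<rho> \<and> proj_Vac d v * \<rho> * proj_Vac d v = \<rho>"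
    then have \<rho>: "\<rho> \<in> carrier_mat (d+v) (d+v)" by (simp add: density_def psd_def)
    have z: "\<rho> $$ (c,e) = 0" if "c < d+v" "e < d+v" "\<not> (d \<le> c \<and> d \<le> e)" for c e
    proof -
      have "\<rho> $$ (c,e) = (proj_Vac d v * \<rho> * proj_Vac d v) $$ (c,e)" using h by simp
      also have "\<dots> = 0" using that by (subst projV_sand[OF \<rho>]) auto
      finally show ?thesis .
    qed
    show "proj_Vac d v * Pm g L \<rho> * proj_Vac d v = Pm g L \<rho>"
    proof (subst projV_sand[OF Pm_car[OF \<rho>]], rule eq_matI)
      fix a b assume "a < dim_row (Pm g L \<rho>)" "b < dim_col (Pm g L \<rho>)"
      then have ab: "a < d+v" "b < d+v" using Pm_car[OF \<rho>, of g L] by auto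
      show "mat (d+v) (d+v) (\<lambda>(a,b). if d \<le> a \<and> d \<le> b then Pm g L \<rho> $$ (a,b) else 0) $$ (a,b) = Pm g L \<rho> $$ (a,b)"
      proof (cases "d \<le> a \<and> d \<le> b")
        case True then show ?thesis using ab by simp
      next
        case False
        have "Pm g L \<rho> $$ (a,b) = 0"
          using ab \<rho> Mg_sandV[OF \<rho> z ab False] by (simp add: Pm_entry0)
        then show ?thesis using ab False by simp
      qed
    qed (use Pm_car[OF \<rho>, of g L] in auto)
  qed
  from ve obtain Ks0 where kr0: "kraus_rep (d+v) Ks0 E"
    and C0: "\<forall>\<rho>\<in>carrier_mat d d. C \<rho> = msum d (map (\<lambda>K. blockA d K * \<rho> * adj (blockA d K)) Ks0)"
    unfolding vacuum_extension_def by blast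
  have restr2: "\<forall>\<rho>\<in>carrier_mat d d. C \<rho> = msum d (map (\<lambda>K. blockA d K * \<rho> * adj (blockA d K)) ?Ms)"
  proof
    fix \<rho> :: "complex mat" assume \<rho>: "\<rho> \<in> carrier_mat d d"
    have embc: "emb d v \<rho> \<in> carrier_mat (d+v) (d+v)" by (simp add: emb_def)
    have "C \<rho> = blockA d (msum (d+v) (map (\<lambda>K. K * emb d v \<rho> * adj K) Ks0))"
      using C0 \<rho> restr[OF _ \<rho>, of Ks0] kr0 unfolding kraus_rep_def by auto
    also have "\<dots> = blockA d (E (emb d v \<rho>))"
      using kr0 embc unfolding kraus_rep_def by auto
    also have "\<dots> = blockA d (Pm g L (emb d v \<rho>))"
    proof (rule eq_matI)
      fix a b assume "a < dim_row (blockA d (Pm g L (emb d v \<rho>)))" "b < dim_col (blockA d (Pm g L (emb d v \<rho>)))"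
      then have ab: "a < d" "b < d" by (auto simp: blockA_def)
      have "(\<Sum>i<length Ks. \<Sum>j<length Ks. Y i j * F i j (emb d v \<rho>) a b) = 0"
      proof (intro sum.neutral ballI)
        fix i j assume i: "i \<in> {..<length Ks}" and j: "j \<in> {..<length Ks}"
        show "Y i j * F i j (emb d v \<rho>) a b = 0"
          using supp i j F_Z[of i j a b \<rho>] ab by (cases "Y i j = 0") auto
      qed
      then have "Pm g L (emb d v \<rho>) $$ (a,b) = E (emb d v \<rho>) $$ (a,b)"
        using Pm_gram[OF gram embc, of a b] ab by simp
      then show "blockA d (E (emb d v \<rho>)) $$ (a,b) = blockA d (Pm g L (emb d v \<rho>)) $$ (a,b)"
        using ab by (simp add: blockA_def)
    qed (auto simp: blockA_def)
    also have "\<dots> = blockA d (msum (d+v) (map (\<lambda>K. K * emb d v \<rho> * adj K) ?Ms))"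
      by (simp add: Pm_def comp_def)
    also have "\<dots> = msum d (map (\<lambda>K. blockA d K * \<rho> * adj (blockA d K)) ?Ms)"
      by (rule restr[symmetric]) (use \<rho> in auto)
    finally show "C \<rho> = msum d (map (\<lambda>K. blockA d K * \<rho> * adj (blockA d K)) ?Ms)" .
  qed
  show ?thesis unfolding vacuum_extension_def is_channel_def using kr2 nl2 restr2 by blast
qed

lemma li_entry:
  assumes h: "\<And>a c. a < d+v \<Longrightarrow> c < d+v \<Longrightarrow> (\<Sum>i<length Ks. w i * Ks!i $$ (a,c)) = 0"
    and i: "i < length Ks"
  shows "w i = 0"
proof -
  have car: "\<And>k. k < length Ks \<Longrightarrow> w k \<cdot>\<^sub>m Ks!k \<in> carrier_mat (d+v) (d+v)" using Kcar by auto
  have "msum (d+v) (map (\<lambda>i. w i \<cdot>\<^sub>m Ks ! i) [0..<length Ks]) = 0\<^sub>m (d+v) (d+v)"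
  proof (rule eq_matI)
    fix a c assume "a < dim_row (0\<^sub>m (d+v) (d+v) :: complex mat)" "c < dim_col (0\<^sub>m (d+v) (d+v) :: complex mat)"
    then have ac: "a < d+v" "c < d+v" by auto
    have "msum (d+v) (map (\<lambda>i. w i \<cdot>\<^sub>m Ks ! i) [0..<length Ks]) $$ (a,c) = (\<Sum>i<length Ks. w i * Ks!i $$ (a,c))"
    proof -
      have "msum (d+v) (map (\<lambda>i. w i \<cdot>\<^sub>m Ks ! i) [0..<length Ks]) $$ (a,c) = (\<Sum>k<length Ks. (w k \<cdot>\<^sub>m Ks ! k) $$ (a, c))"
        using ac car by (subst msum_upt) auto
      also have "\<dots> = (\<Sum>i<length Ks. w i * Ks!i $$ (a,c))"
      proof (rule sum.cong[OF refl])
        fix k assume "k \<in> {..<length Ks}"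
        then have "Ks!k \<in> carrier_mat (d+v) (d+v)" using Kcar by auto
        then show "(w k \<cdot>\<^sub>m Ks ! k) $$ (a, c) = w k * Ks!k $$ (a,c)" using ac by auto
      qed
      finally show ?thesis .
    qed
    then show "msum (d+v) (map (\<lambda>i. w i \<cdot>\<^sub>m Ks ! i) [0..<length Ks]) $$ (a,c) = (0\<^sub>m (d+v) (d+v) :: complex mat) $$ (a,c)"
      using h[OF ac] ac by simp
  qed (use msum_upt_carrier[of "length Ks" "\<lambda>i. w i \<cdot>\<^sub>m Ks ! i" "d+v"] car in auto)
  then show ?thesis using li i unfolding lin_indep_mats_def by blast
qed

lemma perturb_contra:
  assumes ve: "vacuum_extension d v C E"
    and ext: "extreme_map (d+v) {E'. vacuum_extension d v C E'} E"
    and herm: "\<forall>i<length Ks. \<forall>j<length Ks. X j i = cnj (X i j)"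
    and nz: "\<exists>i<length Ks. \<exists>j<length Ks. X i j \<noteq> 0"
    and supp: "\<forall>i<length Ks. \<forall>j<length Ks. X i j \<noteq> 0 \<longrightarrow> i \<in> Zs \<or> j \<in> Zs"
    and ker: "\<forall>p q. d \<le> p \<longrightarrow> p < d+v \<longrightarrow> d \<le> q \<longrightarrow> q < d+v \<longrightarrow> (\<Sum>i<length Ks. \<Sum>j<length Ks. X j i * H i j p q) = 0"
    and small: "\<forall>i<length Ks. (\<Sum>j<length Ks. cmod (X i j)) \<le> 1"
  shows False
proof -
  obtain L1 :: nat and g1 :: "nat \<Rightarrow> nat \<Rightarrow> complex" where g1: "\<forall>p<length Ks. \<forall>q<length Ks. (\<Sum>k<L1. g1 k p * cnj (g1 k q)) = (if p = q then 1 else 0) + X p q"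
  proof -
    have "\<exists>L (g :: nat \<Rightarrow> nat \<Rightarrow> complex). \<forall>p<length Ks. \<forall>q<length Ks. (\<Sum>k<L. g k p * cnj (g k q)) = (if p = q then 1 else 0) + X p q"
      by (rule gram_decomp) (use herm small in blast)+
    then show ?thesis by (elim exE) (erule that)
  qed
  have herm2: "- X j i = cnj (- X i j)" if "i < length Ks" "j < length Ks" for i j
  proof -
    have "X j i = cnj (X i j)" using herm that by blast
    then show ?thesis by simp
  qed
  have small2: "\<And>i. i < length Ks \<Longrightarrow> (\<Sum>j<length Ks. cmod (- X i j)) \<le> 1" using small by simp
  obtain L2 :: nat and g2 :: "nat \<Rightarrow> nat \<Rightarrow> complex" where g2: "\<forall>p<length Ks. \<forall>q<length Ks. (\<Sum>k<L2. g2 k p * cnj (g2 k q)) = (if p = q then 1 else 0) + (- X p q)"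
  proof -
    have "\<exists>L (g :: nat \<Rightarrow> nat \<Rightarrow> complex). \<forall>p<length Ks. \<forall>q<length Ks. (\<Sum>k<L. g k p * cnj (g k q)) = (if p = q then 1 else 0) + (- X p q)"
      by (rule gram_decomp[of "length Ks" "\<lambda>i j. - X i j", OF herm2 small2])
    then show ?thesis by (elim exE) (erule that)
  qed
  have kerc: "\<forall>p q. d \<le> p \<longrightarrow> p < d+v \<longrightarrow> d \<le> q \<longrightarrow> q < d+v \<longrightarrow> (\<Sum>i<length Ks. \<Sum>j<length Ks. cnj (X i j) * H i j p q) = 0"
  proof (intro allI impI)
    fix p q assume pq: "d \<le> p" "p < d+v" "d \<le> q" "q < d+v"
    have "(\<Sum>i<length Ks. \<Sum>j<length Ks. cnj (X i j) * H i j p q) = (\<Sum>i<length Ks. \<Sum>j<length Ks. X j i * H i j p q)"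
    proof (intro sum.cong refl)
      fix i j assume "i \<in> {..<length Ks}" "j \<in> {..<length Ks}"
      then have "X j i = cnj (X i j)" using herm by blast
      then show "cnj (X i j) * H i j p q = X j i * H i j p q" by simp
    qed
    then show "(\<Sum>i<length Ks. \<Sum>j<length Ks. cnj (X i j) * H i j p q) = 0" using ker pq by simp
  qed
  have kerc2: "\<forall>p q. d \<le> p \<longrightarrow> p < d+v \<longrightarrow> d \<le> q \<longrightarrow> q < d+v \<longrightarrow> (\<Sum>i<length Ks. \<Sum>j<length Ks. cnj (- X i j) * H i j p q) = 0"
    using kerc by (simp add: sum_negf)
  have supp2: "\<forall>i<length Ks. \<forall>j<length Ks. - X i j \<noteq> 0 \<longrightarrow> i \<in> Zs \<or> j \<in> Zs" using supp by simp
  have ve1: "vacuum_extension d v C (Pm g1 L1)" by (rule pert_ve[OF ve g1 supp kerc])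
  have ve2: "vacuum_extension d v C (Pm g2 L2)" by (rule pert_ve[OF ve g2 supp2 kerc2])
  have mix: "\<forall>\<rho>\<in>carrier_mat (d+v) (d+v). E \<rho> = complex_of_real (1/2) \<cdot>\<^sub>m Pm g1 L1 \<rho> + complex_of_real (1 - 1/2) \<cdot>\<^sub>m Pm g2 L2 \<rho>"
  proof
    fix \<rho> :: "complex mat" assume \<rho>: "\<rho> \<in> carrier_mat (d+v) (d+v)"
    note c1 = Pm_car[OF \<rho>, of g1 L1] and c2 = Pm_car[OF \<rho>, of g2 L2]
    show "E \<rho> = complex_of_real (1/2) \<cdot>\<^sub>m Pm g1 L1 \<rho> + complex_of_real (1 - 1/2) \<cdot>\<^sub>m Pm g2 L2 \<rho>"
    proof (rule eq_matI)
      fix a b assume "a < dim_row (complex_of_real (1/2) \<cdot>\<^sub>m Pm g1 L1 \<rho> + complex_of_real (1 - 1/2) \<cdot>\<^sub>m Pm g2 L2 \<rho>)"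
        "b < dim_col (complex_of_real (1/2) \<cdot>\<^sub>m Pm g1 L1 \<rho> + complex_of_real (1 - 1/2) \<cdot>\<^sub>m Pm g2 L2 \<rho>)"
      then have ab: "a < d+v" "b < d+v" using c2 by auto
      have "(complex_of_real (1/2) \<cdot>\<^sub>m Pm g1 L1 \<rho> + complex_of_real (1 - 1/2) \<cdot>\<^sub>m Pm g2 L2 \<rho>) $$ (a,b)
          = 1/2 * Pm g1 L1 \<rho> $$ (a,b) + 1/2 * Pm g2 L2 \<rho> $$ (a,b)"
        using ab c1 c2 by simp
      also have "\<dots> = E \<rho> $$ (a,b)"
        using Pm_gram[OF g1 \<rho> ab] Pm_gram[OF g2 \<rho> ab] by (simp add: sum_negf field_simps)
      finally show "E \<rho> $$ (a,b) = (complex_of_real (1/2) \<cdot>\<^sub>m Pm g1 L1 \<rho> + complex_of_real (1 - 1/2) \<cdot>\<^sub>m Pm g2 L2 \<rho>) $$ (a,b)" by simp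
    qed (use c1 c2 E_car[OF \<rho>] in auto)
  qed
  have ext2: "\<forall>E1 E2 (t::real). E1 \<in> {E'. vacuum_extension d v C E'} \<and> E2 \<in> {E'. vacuum_extension d v C E'} \<and> 0 < t \<and> t < 1 \<and>
        (\<forall>\<rho> \<in> carrier_mat (d+v) (d+v). E \<rho> = complex_of_real t \<cdot>\<^sub>m E1 \<rho> + complex_of_real (1 - t) \<cdot>\<^sub>m E2 \<rho>) \<longrightarrow>
        (\<forall>\<rho> \<in> carrier_mat (d+v) (d+v). E1 \<rho> = E \<rho> \<and> E2 \<rho> = E \<rho>)"
    using ext unfolding extreme_map_def by blast
  have same: "\<forall>\<rho> \<in> carrier_mat (d+v) (d+v). Pm g1 L1 \<rho> = E \<rho> \<and> Pm g2 L2 \<rho> = E \<rho>"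
  proof -
    have prem: "Pm g1 L1 \<in> {E'. vacuum_extension d v C E'} \<and> Pm g2 L2 \<in> {E'. vacuum_extension d v C E'} \<and> 0 < (1/2::real) \<and> (1/2::real) < 1 \<and>
        (\<forall>\<rho> \<in> carrier_mat (d+v) (d+v). E \<rho> = complex_of_real (1/2) \<cdot>\<^sub>m Pm g1 L1 \<rho> + complex_of_real (1 - 1/2) \<cdot>\<^sub>m Pm g2 L2 \<rho>)"
    proof (intro conjI)
      show "Pm g1 L1 \<in> {E'. vacuum_extension d v C E'}" using ve1 by simp
      show "Pm g2 L2 \<in> {E'. vacuum_extension d v C E'}" using ve2 by simp
      show "0 < (1/2::real)" by simp
      show "(1/2::real) < 1" by simp
      show "\<forall>\<rho> \<in> carrier_mat (d+v) (d+v). E \<rho> = complex_of_real (1/2) \<cdot>\<^sub>m Pm g1 L1 \<rho> + complex_of_real (1 - 1/2) \<cdot>\<^sub>m Pm g2 L2 \<rho>"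
        by (rule mix)
    qed
    show ?thesis using ext2 prem by blast
  qed
  have zero: "(\<Sum>i<length Ks. \<Sum>j<length Ks. X i j * (Ks!i $$ (a,c) * cnj (Ks!j $$ (b,e)))) = 0"
    if abce: "a < d+v" "b < d+v" "c < d+v" "e < d+v" for a b c e
  proof -
    have \<rho>: "unitm (d+v) c e \<in> carrier_mat (d+v) (d+v)" by (simp add: unitm_def)
    have "Pm g1 L1 (unitm (d+v) c e) $$ (a,b) = E (unitm (d+v) c e) $$ (a,b)" using same \<rho> by simp
    then have "(\<Sum>i<length Ks. \<Sum>j<length Ks. X i j * F i j (unitm (d+v) c e) a b) = 0"
      using Pm_gram[OF g1 \<rho> abce(1,2)] by simp
    then show ?thesis using abce by (simp add: F_unit)
  qed
  have step1: "(\<Sum>j<length Ks. X i j * cnj (Ks!j $$ (b,e))) = 0"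
    if i: "i < length Ks" and be: "b < d+v" "e < d+v" for i b e
  proof (rule li_entry[OF _ i])
    fix a c assume ac: "a < d+v" "c < d+v"
    have "(\<Sum>i<length Ks. (\<Sum>j<length Ks. X i j * cnj (Ks!j $$ (b,e))) * Ks!i $$ (a,c))
        = (\<Sum>i<length Ks. \<Sum>j<length Ks. X i j * (Ks!i $$ (a,c) * cnj (Ks!j $$ (b,e))))"
      by (rule sum.cong[OF refl]) (simp add: sum_distrib_left sum_distrib_right mult_ac)
    then show "(\<Sum>i<length Ks. (\<Sum>j<length Ks. X i j * cnj (Ks!j $$ (b,e))) * Ks!i $$ (a,c)) = 0"
      using zero[OF ac(1) be(1) ac(2) be(2)] by simp
  qed
  have Xz: "X i j = 0" if i: "i < length Ks" and j: "j < length Ks" for i j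
  proof -
    have "cnj (X i j) = 0"
    proof (rule li_entry[OF _ j])
      fix b e assume be: "b < d+v" "e < d+v"
      have "(\<Sum>j<length Ks. cnj (X i j) * Ks!j $$ (b,e)) = cnj (\<Sum>j<length Ks. X i j * cnj (Ks!j $$ (b,e)))"
        by (simp add: cnj_sum)
      then show "(\<Sum>j<length Ks. cnj (X i j) * Ks!j $$ (b,e)) = 0" using step1[OF i be] by simp
    qed
    then show ?thesis by simp
  qed
  then show False using nz by blast
qed

lemma scale_X:
  assumes herm: "\<forall>i<length Ks. \<forall>j<length Ks. X j i = cnj (X i j)"
    and nz: "\<exists>i<length Ks. \<exists>j<length Ks. X i j \<noteq> 0"
    and supp: "\<forall>i<length Ks. \<forall>j<length Ks. X i j \<noteq> 0 \<longrightarrow> i \<in> Zs \<or> j \<in> Zs"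
    and ker: "\<forall>p q. d \<le> p \<longrightarrow> p < d+v \<longrightarrow> d \<le> q \<longrightarrow> q < d+v \<longrightarrow> (\<Sum>i<length Ks. \<Sum>j<length Ks. X j i * H i j p q) = 0"
  shows "\<exists>X'. (\<forall>i<length Ks. \<forall>j<length Ks. X' j i = cnj (X' i j)) \<and> (\<exists>i<length Ks. \<exists>j<length Ks. X' i j \<noteq> 0)
     \<and> (\<forall>i<length Ks. \<forall>j<length Ks. X' i j \<noteq> 0 \<longrightarrow> i \<in> Zs \<or> j \<in> Zs)
     \<and> (\<forall>p q. d \<le> p \<longrightarrow> p < d+v \<longrightarrow> d \<le> q \<longrightarrow> q < d+v \<longrightarrow> (\<Sum>i<length Ks. \<Sum>j<length Ks. X' j i * H i j p q) = 0)
     \<and> (\<forall>i<length Ks. (\<Sum>j<length Ks. cmod (X' i j)) \<le> 1)"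
proof -
  define T where "T = 1 + (\<Sum>i<length Ks. \<Sum>j<length Ks. cmod (X i j))"
  have T0: "T \<ge> 1" unfolding T_def by (simp add: sum_nonneg)
  define X' where "X' i j = X i j / complex_of_real T" for i j
  have Tn: "complex_of_real T \<noteq> 0" using T0 by simp
  have "\<forall>i<length Ks. \<forall>j<length Ks. X' j i = cnj (X' i j)"
  proof (intro allI impI)
    fix i j assume "i < length Ks" "j < length Ks"
    then have "X j i = cnj (X i j)" using herm by blast
    then show "X' j i = cnj (X' i j)" by (simp add: X'_def)
  qed
  moreover have "\<exists>i<length Ks. \<exists>j<length Ks. X' i j \<noteq> 0" using nz Tn by (simp add: X'_def)
  moreover have "\<forall>i<length Ks. \<forall>j<length Ks. X' i j \<noteq> 0 \<longrightarrow> i \<in> Zs \<or> j \<in> Zs" using supp by (simp add: X'_def)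
  moreover have "\<forall>p q. d \<le> p \<longrightarrow> p < d+v \<longrightarrow> d \<le> q \<longrightarrow> q < d+v \<longrightarrow> (\<Sum>i<length Ks. \<Sum>j<length Ks. X' j i * H i j p q) = 0"
  proof (intro allI impI)
    fix p q assume pq: "d \<le> p" "p < d+v" "d \<le> q" "q < d+v"
    have "(\<Sum>i<length Ks. \<Sum>j<length Ks. X' j i * H i j p q) = (\<Sum>i<length Ks. \<Sum>j<length Ks. X j i * H i j p q) / complex_of_real T"
      by (simp add: X'_def sum_divide_distrib)
    then show "(\<Sum>i<length Ks. \<Sum>j<length Ks. X' j i * H i j p q) = 0" using ker pq by simp
  qed
  moreover have "\<forall>i<length Ks. (\<Sum>j<length Ks. cmod (X' i j)) \<le> 1"
  proof (intro allI impI)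
    fix i assume i: "i < length Ks"
    have "(\<Sum>j<length Ks. cmod (X i j)) \<le> (\<Sum>i<length Ks. \<Sum>j<length Ks. cmod (X i j))"
      using i by (intro member_le_sum) (auto intro: sum_nonneg)
    then have le: "(\<Sum>j<length Ks. cmod (X i j)) \<le> T" unfolding T_def by simp
    have "(\<Sum>j<length Ks. cmod (X' i j)) = (\<Sum>j<length Ks. cmod (X i j)) / T"
      using T0 by (simp add: X'_def norm_divide sum_divide_distrib)
    also have "\<dots> \<le> 1" using le T0 by simp
    finally show "(\<Sum>j<length Ks. cmod (X' i j)) \<le> 1" .
  qed
  ultimately show ?thesis by blast
qed

lemma exists_j0: assumes "0 < d" shows "\<exists>j0<length Ks. j0 \<notin> Zs"
proof (rule ccontr)
  assume "\<not> (\<exists>j0<length Ks. j0 \<notin> Zs)"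
  then have allZ: "\<And>i. i < length Ks \<Longrightarrow> i \<in> Zs" by blast
  have "(\<Sum>i<length Ks. H i i 0 0) = 1" using TP_entry[of 0 0] assms by simp
  moreover have "(\<Sum>i<length Ks. H i i 0 0) = 0"
  proof (intro sum.neutral ballI)
    fix i assume i: "i \<in> {..<length Ks}"
    show "H i i 0 0 = 0" unfolding H_def
    proof (intro sum.neutral ballI)
      fix c assume c: "c \<in> {..<d+v}"
      have "Ks!i $$ (c,0) = 0"
      proof (cases "c < d")
        case True then show ?thesis using allZ i assms Zblk by auto
      next
        case False then show ?thesis using i c assms blk1 by auto
      qed
      then show "cnj (Ks!i $$ (c,0)) * Ks!i $$ (c,0) = 0" by simp
    qed
  qed
  ultimately show False by simp
qed

lemma H_cnj: "cnj (H i j a b) = H j i b a"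
  unfolding H_def by (simp add: cnj_sum mult.commute)

lemma exists_X:
  assumes j0: "j0 < length Ks" "j0 \<notin> Zs" and big: "v * v < card Zs * card Zs + 2 * card Zs"
  shows "\<exists>X :: nat \<Rightarrow> nat \<Rightarrow> complex. (\<forall>i<length Ks. \<forall>j<length Ks. X j i = cnj (X i j)) \<and> (\<exists>i<length Ks. \<exists>j<length Ks. X i j \<noteq> 0)
     \<and> (\<forall>i<length Ks. \<forall>j<length Ks. X i j \<noteq> 0 \<longrightarrow> i \<in> Zs \<or> j \<in> Zs)
     \<and> (\<forall>p q. d \<le> p \<longrightarrow> p < d+v \<longrightarrow> d \<le> q \<longrightarrow> q < d+v \<longrightarrow> (\<Sum>i<length Ks. \<Sum>j<length Ks. X j i * H i j p q) = 0)"
proof -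
  have finZ: "finite Zs" by (rule finite_subset[of _ "{..<length Ks}"]) (auto simp: Zs_def)
  have Zr: "\<And>i. i \<in> Zs \<Longrightarrow> i < length Ks" by (simp add: Zs_def)
  define S where "S = insert j0 Zs"
  define U where "U = S \<times> S - {(j0,j0)}"
  define Eq where "Eq = {d..<d+v} \<times> {d..<d+v}"
  have finS: "finite S" using finZ by (simp add: S_def)
  have cS: "card S = card Zs + 1" using j0 finZ by (simp add: S_def)
  have finU: "finite U" using finS by (simp add: U_def)
  have "card U = card S * card S - 1"
  proof -
    have "card (S \<times> S - {(j0,j0)}) = card (S \<times> S) - 1"
      by (rule card_Diff_singleton) (use finS in \<open>auto simp: S_def\<close>)
    then show ?thesis unfolding U_def by (simp add: card_cartesian_product)
  qed
  then have cU: "card U = card Zs * card Zs + 2 * card Zs" using cS by (simp add: algebra_simps)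
  have finEq: "finite Eq" by (simp add: Eq_def)
  have cEq: "card Eq = v * v" by (simp add: Eq_def card_cartesian_product)
  have lt: "card Eq < card U" using big cU cEq by simp
  obtain y :: "nat \<times> nat \<Rightarrow> complex" where y1: "\<exists>u\<in>U. y u \<noteq> 0"
    and y2: "\<forall>e\<in>Eq. (\<Sum>u\<in>U. H (snd u) (fst u) (fst e) (snd e) * y u) = 0"
    using kernel_exists[OF finU finEq lt, of "\<lambda>e u. H (snd u) (fst u) (fst e) (snd e)"] by blast
  define Y where "Y i j = (if (i,j) \<in> U then y (i,j) else 0)" for i j
  have Usub: "U \<subseteq> {..<length Ks} \<times> {..<length Ks}" using j0 Zr by (auto simp: U_def S_def)
  have kerY: "(\<Sum>i<length Ks. \<Sum>j<length Ks. Y j i * H i j p q) = 0" if pq: "d \<le> p" "p < d+v" "d \<le> q" "q < d+v" for p q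
  proof -
    have "(\<Sum>i<length Ks. \<Sum>j<length Ks. Y j i * H i j p q) = (\<Sum>j<length Ks. \<Sum>i<length Ks. Y j i * H i j p q)"
      by (rule sum.swap)
    also have "\<dots> = (\<Sum>(j,i)\<in>{..<length Ks} \<times> {..<length Ks}. Y j i * H i j p q)"
      by (rule sum.cartesian_product)
    also have "\<dots> = (\<Sum>(j,i)\<in>U. Y j i * H i j p q)"
      by (rule sum.mono_neutral_right) (use Usub finU in \<open>auto simp: Y_def\<close>)
    also have "\<dots> = (\<Sum>u\<in>U. H (snd u) (fst u) p q * y u)"
      by (rule sum.cong) (auto simp: Y_def)
    also have "\<dots> = 0" using y2 pq by (auto simp: Eq_def)
    finally show ?thesis .
  qed
  define Yd where "Yd i j = cnj (Y j i)" for i j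
  have kerYd: "(\<Sum>i<length Ks. \<Sum>j<length Ks. Yd j i * H i j p q) = 0" if pq: "d \<le> p" "p < d+v" "d \<le> q" "q < d+v" for p q
  proof -
    have "(\<Sum>i<length Ks. \<Sum>j<length Ks. Yd j i * H i j p q) = cnj (\<Sum>i<length Ks. \<Sum>j<length Ks. Y i j * H j i q p)"
      by (simp add: Yd_def cnj_sum H_cnj)
    also have "(\<Sum>i<length Ks. \<Sum>j<length Ks. Y i j * H j i q p) = (\<Sum>j<length Ks. \<Sum>i<length Ks. Y i j * H j i q p)"
      by (rule sum.swap)
    also have "\<dots> = 0" using kerY[of q p] pq by simp
    finally show ?thesis by simp
  qed
  have suppU: "i \<in> Zs \<or> j \<in> Zs" if "(i,j) \<in> U" for i j
    using that by (auto simp: U_def S_def)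
  obtain a b where ab: "(a,b) \<in> U" "y (a,b) \<noteq> 0" using y1 by auto
  have abr: "a < length Ks" "b < length Ks" using ab Usub by auto
  have Yab: "Y a b \<noteq> 0" using ab by (simp add: Y_def)
  define X1 where "X1 i j = Y i j + Yd i j" for i j
  define X2 where "X2 i j = \<i> * (Y i j - Yd i j)" for i j
  have suppY: "i \<in> Zs \<or> j \<in> Zs" if "Y i j \<noteq> 0 \<or> Y j i \<noteq> 0" for i j
    using that suppU[of i j] suppU[of j i] by (auto simp: Y_def split: if_splits)
  have P1: "(\<forall>i<length Ks. \<forall>j<length Ks. X1 j i = cnj (X1 i j))
     \<and> (\<forall>i<length Ks. \<forall>j<length Ks. X1 i j \<noteq> 0 \<longrightarrow> i \<in> Zs \<or> j \<in> Zs)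
     \<and> (\<forall>p q. d \<le> p \<longrightarrow> p < d+v \<longrightarrow> d \<le> q \<longrightarrow> q < d+v \<longrightarrow> (\<Sum>i<length Ks. \<Sum>j<length Ks. X1 j i * H i j p q) = 0)"
  proof (intro conjI allI impI)
    fix i j show "X1 j i = cnj (X1 i j)" by (simp add: X1_def Yd_def)
  next
    fix i j assume "X1 i j \<noteq> 0"
    then have "Y i j \<noteq> 0 \<or> Y j i \<noteq> 0" by (auto simp: X1_def Yd_def)
    then show "i \<in> Zs \<or> j \<in> Zs" by (rule suppY)
  next
    fix p q assume pq: "d \<le> p" "p < d+v" "d \<le> q" "q < d+v"
    have "(\<Sum>i<length Ks. \<Sum>j<length Ks. X1 j i * H i j p q) = (\<Sum>i<length Ks. \<Sum>j<length Ks. Y j i * H i j p q) + (\<Sum>i<length Ks. \<Sum>j<length Ks. Yd j i * H i j p q)"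
      by (simp add: X1_def distrib_right sum.distrib)
    then show "(\<Sum>i<length Ks. \<Sum>j<length Ks. X1 j i * H i j p q) = 0" using kerY[OF pq] kerYd[OF pq] by simp
  qed
  have P2: "(\<forall>i<length Ks. \<forall>j<length Ks. X2 j i = cnj (X2 i j))
     \<and> (\<forall>i<length Ks. \<forall>j<length Ks. X2 i j \<noteq> 0 \<longrightarrow> i \<in> Zs \<or> j \<in> Zs)
     \<and> (\<forall>p q. d \<le> p \<longrightarrow> p < d+v \<longrightarrow> d \<le> q \<longrightarrow> q < d+v \<longrightarrow> (\<Sum>i<length Ks. \<Sum>j<length Ks. X2 j i * H i j p q) = 0)"
  proof (intro conjI allI impI)
    fix i j show "X2 j i = cnj (X2 i j)" by (simp add: X2_def Yd_def right_diff_distrib)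
  next
    fix i j assume "X2 i j \<noteq> 0"
    then have "Y i j \<noteq> 0 \<or> Y j i \<noteq> 0" by (auto simp: X2_def Yd_def)
    then show "i \<in> Zs \<or> j \<in> Zs" by (rule suppY)
  next
    fix p q assume pq: "d \<le> p" "p < d+v" "d \<le> q" "q < d+v"
    have "(\<Sum>i<length Ks. \<Sum>j<length Ks. X2 j i * H i j p q) = \<i> * (\<Sum>i<length Ks. \<Sum>j<length Ks. Y j i * H i j p q) - \<i> * (\<Sum>i<length Ks. \<Sum>j<length Ks. Yd j i * H i j p q)"
    proof -
      have e: "X2 j i * H i j p q = \<i> * (Y j i * H i j p q) - \<i> * (Yd j i * H i j p q)" for i j
        by (simp add: X2_def left_diff_distrib right_diff_distrib mult.assoc)
      have "(\<Sum>i<length Ks. \<Sum>j<length Ks. X2 j i * H i j p q) = (\<Sum>i<length Ks. \<Sum>j<length Ks. \<i> * (Y j i * H i j p q) - \<i> * (Yd j i * H i j p q))"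
        by (simp only: e)
      also have "\<dots> = \<i> * (\<Sum>i<length Ks. \<Sum>j<length Ks. Y j i * H i j p q) - \<i> * (\<Sum>i<length Ks. \<Sum>j<length Ks. Yd j i * H i j p q)"
        by (simp only: sum_subtractf sum_distrib_left)
      finally show ?thesis .
    qed
    then show "(\<Sum>i<length Ks. \<Sum>j<length Ks. X2 j i * H i j p q) = 0" using kerY[OF pq] kerYd[OF pq] by simp
  qed
  have "X1 a b \<noteq> 0 \<or> X2 a b \<noteq> 0"
  proof (rule ccontr)
    assume "\<not> (X1 a b \<noteq> 0 \<or> X2 a b \<noteq> 0)"
    then have e1: "Y a b + cnj (Y b a) = 0" and e2: "Y a b - cnj (Y b a) = 0" by (auto simp: X1_def X2_def Yd_def)
    have "2 * Y a b = (Y a b + cnj (Y b a)) + (Y a b - cnj (Y b a))" by (simp add: algebra_simps)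
    also have "\<dots> = 0" unfolding e1 e2 by simp
    finally have "2 * Y a b = 0" .
    then show False using Yab by simp
  qed
  then show ?thesis
  proof
    assume h: "X1 a b \<noteq> 0"
    have nz1: "\<exists>i<length Ks. \<exists>j<length Ks. X1 i j \<noteq> 0"
      by (rule exI[of _ a], rule conjI[OF abr(1)], rule exI[of _ b], rule conjI[OF abr(2) h])
    show ?thesis
    proof -
      have a1: "\<forall>i<length Ks. \<forall>j<length Ks. X1 j i = cnj (X1 i j)" using P1 by blast
      have a2: "\<forall>i<length Ks. \<forall>j<length Ks. X1 i j \<noteq> 0 \<longrightarrow> i \<in> Zs \<or> j \<in> Zs" using P1 by blast
      have a3: "\<forall>p q. d \<le> p \<longrightarrow> p < d+v \<longrightarrow> d \<le> q \<longrightarrow> q < d+v \<longrightarrow> (\<Sum>i<length Ks. \<Sum>j<length Ks. X1 j i * H i j p q) = 0" using P1 by blast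
      show ?thesis by (rule exI[of _ X1], intro conjI a1 a2 a3 nz1)
    qed
  next
    assume h: "X2 a b \<noteq> 0"
    have nz2: "\<exists>i<length Ks. \<exists>j<length Ks. X2 i j \<noteq> 0"
      by (rule exI[of _ a], rule conjI[OF abr(1)], rule exI[of _ b], rule conjI[OF abr(2) h])
    show ?thesis
    proof -
      have a1: "\<forall>i<length Ks. \<forall>j<length Ks. X2 j i = cnj (X2 i j)" using P2 by blast
      have a2: "\<forall>i<length Ks. \<forall>j<length Ks. X2 i j \<noteq> 0 \<longrightarrow> i \<in> Zs \<or> j \<in> Zs" using P2 by blast
      have a3: "\<forall>p q. d \<le> p \<longrightarrow> p < d+v \<longrightarrow> d \<le> q \<longrightarrow> q < d+v \<longrightarrow> (\<Sum>i<length Ks. \<Sum>j<length Ks. X2 j i * H i j p q) = 0" using P2 by blast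
      show ?thesis by (rule exI[of _ X2], intro conjI a1 a2 a3 nz2)
    qed
  qed
qed

end

theorem proposition5:
  fixes d v :: nat
    and C E :: "complex mat \<Rightarrow> complex mat"
    and Ks :: "complex mat list"
  assumes "0 < d"
    and "is_channel d C"
    and "1 \<le> v"
    and "vacuum_extension d v C E"
    and "kraus_rep (d+v) Ks E"
    and "lin_indep_mats (d+v) Ks"
    and "extreme_map (d+v) {E'. vacuum_extension d v C E'} E"
  shows "real (card {i. i < length Ks \<and> blockA d (Ks ! i) = 0\<^sub>m d d}) \<le> sqrt (real v ^ 2 + 1) - 1
         \<and> (v = 1 \<longrightarrow> (\<forall>i < length Ks. blockA d (Ks ! i) \<noteq> 0\<^sub>m d d))"
proof -
  have nl: "no_leakage d v E" using assms(4) unfolding vacuum_extension_def by blast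
  interpret vx d v Ks E using assms(5) nl assms(6) by unfold_locales
  have Zeq: "{i. i < length Ks \<and> blockA d (Ks ! i) = 0\<^sub>m d d} = Zs" by (simp add: Zs_def)
  have finZ: "finite Zs" by (rule finite_subset[of _ "{..<length Ks}"]) (auto simp: Zs_def)
  obtain j0 where j0: "j0 < length Ks" "j0 \<notin> Zs" using exists_j0[OF assms(1)] by blast
  have nat: "card Zs * card Zs + 2 * card Zs \<le> v * v"
  proof (rule ccontr)
    assume "\<not> ?thesis"
    then have big: "v * v < card Zs * card Zs + 2 * card Zs" by simp
    obtain X :: "nat \<Rightarrow> nat \<Rightarrow> complex" where X1: "\<forall>i<length Ks. \<forall>j<length Ks. X j i = cnj (X i j)"
      and X2: "\<exists>i<length Ks. \<exists>j<length Ks. X i j \<noteq> 0"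
      and X3: "\<forall>i<length Ks. \<forall>j<length Ks. X i j \<noteq> 0 \<longrightarrow> i \<in> Zs \<or> j \<in> Zs"
      and X4: "\<forall>p q. d \<le> p \<longrightarrow> p < d+v \<longrightarrow> d \<le> q \<longrightarrow> q < d+v \<longrightarrow> (\<Sum>i<length Ks. \<Sum>j<length Ks. X j i * H i j p q) = 0"
      using exists_X[OF j0 big] by blast
    obtain X' :: "nat \<Rightarrow> nat \<Rightarrow> complex" where Y1: "\<forall>i<length Ks. \<forall>j<length Ks. X' j i = cnj (X' i j)"
      and Y2: "\<exists>i<length Ks. \<exists>j<length Ks. X' i j \<noteq> 0"
      and Y3: "\<forall>i<length Ks. \<forall>j<length Ks. X' i j \<noteq> 0 \<longrightarrow> i \<in> Zs \<or> j \<in> Zs"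
      and Y4: "\<forall>p q. d \<le> p \<longrightarrow> p < d+v \<longrightarrow> d \<le> q \<longrightarrow> q < d+v \<longrightarrow> (\<Sum>i<length Ks. \<Sum>j<length Ks. X' j i * H i j p q) = 0"
      and Y5: "\<forall>i<length Ks. (\<Sum>j<length Ks. cmod (X' i j)) \<le> 1"
      using scale_X[OF X1 X2 X3 X4] by blast
    show False by (rule perturb_contra[OF assms(4) assms(7) Y1 Y2 Y3 Y4 Y5])
  qed
  have part1: "real (card Zs) \<le> sqrt (real v ^ 2 + 1) - 1"
  proof -
    have "(card Zs + 1)^2 \<le> v^2 + 1" using nat by (simp add: power2_eq_square algebra_simps)
    then have "real ((card Zs + 1)^2) \<le> real (v^2 + 1)" by (simp only: of_nat_le_iff)
    then have "(real (card Zs) + 1)^2 \<le> real v ^ 2 + 1" by (simp add: add.commute)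
    then have "real (card Zs) + 1 \<le> sqrt (real v ^ 2 + 1)" by (rule real_le_rsqrt)
    then show ?thesis by simp
  qed
  have part2: "v = 1 \<longrightarrow> (\<forall>i<length Ks. blockA d (Ks ! i) \<noteq> 0\<^sub>m d d)"
  proof (intro impI allI)
    fix i assume v1: "v = 1" and i: "i < length Ks"
    have "card Zs = 0"
    proof (rule ccontr)
      assume "card Zs \<noteq> 0"
      then have "card Zs * card Zs + 2 * card Zs \<ge> 2" by (cases "card Zs") auto
      then show False using nat v1 by simp
    qed
    then have "Zs = {}" using finZ by simp
    then show "blockA d (Ks ! i) \<noteq> 0\<^sub>m d d" using i by (auto simp: Zs_def)
  qed
  show ?thesis using part1 part2 Zeq by simp
qed

end
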